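(* Fix $m\ge 2$. The receiver's optimal payoff over all protocols with $m$ memory states is \[ \sup_{\Pi} U^{R}(\Pi)= \begin{cases} 1-\dfrac{2\sqrt{p(1-p)\gamma^{m-2}}-1}{\gamma^{m-2}-1}, & \text{if } \gamma^{m-2}>\kappa,\\[1em] \max\{p,1-p\}, & \text{otherwise.} \end{cases} \] Furthermore, if $m\ge 4$ and $\gamma^{m-2}>\kappa$, there is no protocol $\Pi^*$ with $m$ memory states such that $U^R(\Pi^* )=\sup_{\Pi}U^R(\Pi)$.
   Context: Setting. The state of nature is $\theta\in\Theta=\{H,L\}$ with prior $\Pr(\theta=H)=p\in(0,1)$. A sender privately observes $\theta$; a receiver does not. $S$ is a finite signal set; conditional on $\theta$, signals are i.i.d. with distribution $\pi_\theta$ on $S$, where $\pi_\theta(s)>0$ for all $s\in S,\theta\in\Theta$, and $\pi_H\neq\pi_L$. The receiver has the set of memory states $M=\{1,\dots,m\}$ and chooses a protocol $\Pi=(f,g,a)$: a transition function $f:M\times S\to\Delta(M)$ ($f(i,s)(j)$ is the probability of moving from memory state $i$ to $j$ after signal $s$), an initial distribution $g\in\Delta(M)$ of $m_0$, and an action rule $a:M\to[0,1]$ (probability of action $H$ if the game ends in that memory state). A sender strategy is $\sigma:M\times\Theta\to[0,1]$, the probability of stopping in the current memory state given $\theta$. Timing: $m_0\sim g$; in each period $t=0,1,\dots$, with current memory state $m_t$, the game ends if $m_t$ is absorbing ($f(m_t,s)(m_t)=1$ for all $s$); otherwise the sender stops with probability $\sigma(m_t,\theta)$, ending the game; if not stopped,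 a signal $s_t\sim\pi_\theta$ is generated and $m_{t+1}\sim f(m_t,s_t)$. When the game ends in state $m_t$ the receiver takes action $H$ with probability $a(m_t)$ and $L$ otherwise. The receiver's payoff is $1$ if the action equals $\theta$ and $0$ otherwise; the sender's payoff is $1$ if the action is $H$ and $0$ otherwise; there is no discounting; if the game never ends both get $0$. $U^S(\Pi,\sigma),U^R(\Pi,\sigma)$ denote expected payoffs, $\mathrm{br}(\Pi)=\arg\sup_\sigma U^S(\Pi,\sigma)$ is the set of sender best responses, and $U^R(\Pi):=U^R(\Pi,\sigma)$, $U^S(\Pi):=U^S(\Pi,\sigma)$ for $\sigma\in\mathrm{br}(\Pi)$ (these do not depend on the choice of best response when the game ends with probability one). The supremum $\sup_\Pi$ is over all protocols on $M$. Signal informativeness: $\bar\ell=\max_{s\in S}\pi_H(s)/\pi_L(s)$, $\underline\ell=\min_{s\in S}\pi_H(s)/\pi_L(s)$, $\gamma=\bar\ell/\underline\ell\in(1,\infty)$. Prior skewness: $\kappa=\max\{p/(1-p),(1-p)/p\}$. *)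

theory Defs
  imports Complex_Main
begin

text \<open>Memory states are the naturals 1..m.
  Signals are the elements of a finite type 's.
  pi th s is the probability of signal s in state th.
  A protocol is (f, g, a): f i s j is the probability of moving from memory state i
  to memory state j after signal s; g is the initial distribution; a i is the
  probability of action H when the game ends in memory state i.
  A sender strategy sigma i th is the probability of stopping in memory state i given th.\<close>

datatype theta = H | L

definition valid_protocol ::
  "nat \<Rightarrow> (nat \<Rightarrow> 's \<Rightarrow> nat \<Rightarrow> real) \<Rightarrow> (nat \<Rightarrow> real) \<Rightarrow> (nat \<Rightarrow> real) \<Rightarrow> bool" where
  "valid_protocol m f g a \<longleftrightarrow>
     (\<forall>i\<in>{1..m}. \<forall>s. (\<forall>j\<in>{1..m}. 0 \<le> f i s j) \<and> (\<Sum>j\<in>{1..m}. f i s j) = 1) \<and>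
     (\<forall>i\<in>{1..m}. 0 \<le> g i) \<and> (\<Sum>i\<in>{1..m}. g i) = 1 \<and>
     (\<forall>i\<in>{1..m}. 0 \<le> a i \<and> a i \<le> 1)"

definition valid_strategy :: "nat \<Rightarrow> (nat \<Rightarrow> theta \<Rightarrow> real) \<Rightarrow> bool" where
  "valid_strategy m \<sigma> \<longleftrightarrow> (\<forall>i\<in>{1..m}. \<forall>th. 0 \<le> \<sigma> i th \<and> \<sigma> i th \<le> 1)"

definition absorbing :: "(nat \<Rightarrow> 's \<Rightarrow> nat \<Rightarrow> real) \<Rightarrow> nat \<Rightarrow> bool" where
  "absorbing f i \<longleftrightarrow> (\<forall>s. f i s i = 1)"

text \<open>endval m pi f sigma u th n x: expected value of u (end memory state), counting only
  plays that end in one of the periods 0..n-1, starting from memory state x in period 0,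
  given state of nature th.\<close>

fun endval ::
  "nat \<Rightarrow> (theta \<Rightarrow> 's::finite \<Rightarrow> real) \<Rightarrow> (nat \<Rightarrow> 's \<Rightarrow> nat \<Rightarrow> real) \<Rightarrow>
   (nat \<Rightarrow> theta \<Rightarrow> real) \<Rightarrow> (nat \<Rightarrow> real) \<Rightarrow> theta \<Rightarrow> nat \<Rightarrow> nat \<Rightarrow> real" where
  "endval m \<pi> f \<sigma> u th 0 x = 0"
| "endval m \<pi> f \<sigma> u th (Suc n) x =
     (if absorbing f x then u x
      else \<sigma> x th * u x +
           (1 - \<sigma> x th) * (\<Sum>s\<in>UNIV. \<pi> th s * (\<Sum>j\<in>{1..m}. f x s j * endval m \<pi> f \<sigma> u th n j)))"

text \<open>Expected value of u at the end of the game (0 if the game never ends), given th.\<close>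
definition payoff_theta ::
  "nat \<Rightarrow> (theta \<Rightarrow> 's::finite \<Rightarrow> real) \<Rightarrow> (nat \<Rightarrow> 's \<Rightarrow> nat \<Rightarrow> real) \<Rightarrow> (nat \<Rightarrow> real) \<Rightarrow>
   (nat \<Rightarrow> theta \<Rightarrow> real) \<Rightarrow> (nat \<Rightarrow> real) \<Rightarrow> theta \<Rightarrow> real" where
  "payoff_theta m \<pi> f g \<sigma> u th = (\<Sum>x\<in>{1..m}. g x * lim (\<lambda>n. endval m \<pi> f \<sigma> u th n x))"

definition US ::
  "nat \<Rightarrow> (theta \<Rightarrow> 's::finite \<Rightarrow> real) \<Rightarrow> real \<Rightarrow> (nat \<Rightarrow> 's \<Rightarrow> nat \<Rightarrow> real) \<Rightarrow> (nat \<Rightarrow> real) \<Rightarrow>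
   (nat \<Rightarrow> real) \<Rightarrow> (nat \<Rightarrow> theta \<Rightarrow> real) \<Rightarrow> real" where
  "US m \<pi> p f g a \<sigma> = p * payoff_theta m \<pi> f g \<sigma> a H + (1 - p) * payoff_theta m \<pi> f g \<sigma> a L"

definition UR ::
  "nat \<Rightarrow> (theta \<Rightarrow> 's::finite \<Rightarrow> real) \<Rightarrow> real \<Rightarrow> (nat \<Rightarrow> 's \<Rightarrow> nat \<Rightarrow> real) \<Rightarrow> (nat \<Rightarrow> real) \<Rightarrow>
   (nat \<Rightarrow> real) \<Rightarrow> (nat \<Rightarrow> theta \<Rightarrow> real) \<Rightarrow> real" where
  "UR m \<pi> p f g a \<sigma> = p * payoff_theta m \<pi> f g \<sigma> a H
                        + (1 - p) * payoff_theta m \<pi> f g \<sigma> (\<lambda>x. 1 - a x) L"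

definition br ::
  "nat \<Rightarrow> (theta \<Rightarrow> 's::finite \<Rightarrow> real) \<Rightarrow> real \<Rightarrow> (nat \<Rightarrow> 's \<Rightarrow> nat \<Rightarrow> real) \<Rightarrow> (nat \<Rightarrow> real) \<Rightarrow>
   (nat \<Rightarrow> real) \<Rightarrow> (nat \<Rightarrow> theta \<Rightarrow> real) set" where
  "br m \<pi> p f g a = {\<sigma>. valid_strategy m \<sigma> \<and>
       (\<forall>\<sigma>'. valid_strategy m \<sigma>' \<longrightarrow> US m \<pi> p f g a \<sigma>' \<le> US m \<pi> p f g a \<sigma>)}"

definition UR_values :: "nat \<Rightarrow> (theta \<Rightarrow> 's::finite \<Rightarrow> real) \<Rightarrow> real \<Rightarrow> real set" where
  "UR_values m \<pi> p = {UR m \<pi> p f g a \<sigma> | f g a \<sigma>.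
       valid_protocol m f g a \<and> \<sigma> \<in> br m \<pi> p f g a}"

definition lbar :: "(theta \<Rightarrow> 's::finite \<Rightarrow> real) \<Rightarrow> real" where
  "lbar \<pi> = Max (range (\<lambda>s. \<pi> H s / \<pi> L s))"

definition lunder :: "(theta \<Rightarrow> 's::finite \<Rightarrow> real) \<Rightarrow> real" where
  "lunder \<pi> = Min (range (\<lambda>s. \<pi> H s / \<pi> L s))"

definition gamma :: "(theta \<Rightarrow> 's::finite \<Rightarrow> real) \<Rightarrow> real" where
  "gamma \<pi> = lbar \<pi> / lunder \<pi>"

definition kappa :: "real \<Rightarrow> real" where
  "kappa p = max (p / (1 - p)) ((1 - p) / p)"

end

theory Submission
  imports Defs
begin


locale gseq =
  fixes K :: nat and w :: "nat \<Rightarrow> real" and gm :: real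
  assumes K1: "1 \<le> K"
    and wmono: "\<And>i j. i < j \<Longrightarrow> j < K \<Longrightarrow> w i < w j"
    and w0: "0 \<le> w 0" and w1: "w (K - 1) \<le> 1"
    and gm: "1 < gm"
begin

definition T :: "nat \<Rightarrow> real" where "T k = gm ^ (K - 2 - k) * (w (Suc k) - w k)"
definition D :: real where "D = (\<Sum>k = 0..<K - 1. T k)"
definition s :: real where "s = (w (K - 1) - w 0) / D"
definition Gs :: "nat \<Rightarrow> real" where "Gs i = w 0 + s * (\<Sum>k = 0..<i. T k)"

lemma T_pos: "Suc k < K \<Longrightarrow> 0 < T k"
  unfolding T_def using wmono[of k "Suc k"] gm by (intro mult_pos_pos) auto

lemma Gs_diff: "i \<le> j \<Longrightarrow> Gs j - Gs i = s * (\<Sum>k = i..<j. T k)"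
  unfolding Gs_def using sum_diff_nat_ivl[of 0 i j T] by (simp add: algebra_simps)

lemma D_pos: "2 \<le> K \<Longrightarrow> 0 < D"
  unfolding D_def using T_pos by (intro sum_pos) auto

lemma w_le: "i \<le> j \<Longrightarrow> j < K \<Longrightarrow> w i \<le> w j"
  using wmono[of i j] by (cases "i = j") auto

lemma s_nonneg: "0 \<le> s"
proof (cases "2 \<le> K")
  case True then show ?thesis unfolding s_def using D_pos w_le[of 0 "K - 1"] K1
    by (intro divide_nonneg_pos) auto
next
  case False then have "K = 1" using K1 by auto
  then show ?thesis unfolding s_def D_def by simp
qed

lemma s_pos: "2 \<le> K \<Longrightarrow> 0 < s"
  unfolding s_def using D_pos wmono[of 0 "K - 1"] by (intro divide_pos_pos) auto

lemma Gs0: "Gs 0 = w 0" unfolding Gs_def by simp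

lemma Gs_top: "Gs (K - 1) = w (K - 1)"
proof (cases "2 \<le> K")
  case True
  have "Gs (K - 1) = w 0 + (w (K - 1) - w 0) / D * D" unfolding Gs_def s_def D_def by simp
  also have "\<dots> = w (K - 1)" using D_pos[OF True] by simp
  finally show ?thesis .
next
  case False then have "K = 1" using K1 by auto
  then show ?thesis unfolding Gs_def by simp
qed

lemma tele: "i \<le> j \<Longrightarrow> (\<Sum>k = i..<j. w (Suc k) - w k) = w j - w i"
  by (rule sum_Suc_diff')

lemma chord_up:
  assumes ij: "i < j" "j < K"
  shows "Gs j - Gs i \<le> (s * gm ^ (K - 1 - i) / gm) * (w j - w i)"
proof -
  have "(\<Sum>k = i..<j. T k) \<le> (\<Sum>k = i..<j. gm ^ (K - 2 - i) * (w (Suc k) - w k))"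
  proof (intro sum_mono)
    fix k assume k: "k \<in> {i..<j}"
    have "gm ^ (K - 2 - k) \<le> gm ^ (K - 2 - i)" using gm k by (intro power_increasing) auto
    moreover have "0 \<le> w (Suc k) - w k" using w_le[of k "Suc k"] k ij by auto
    ultimately show "T k \<le> gm ^ (K - 2 - i) * (w (Suc k) - w k)" unfolding T_def
      by (intro mult_right_mono) auto
  qed
  also have "\<dots> = gm ^ (K - 2 - i) * (w j - w i)" using tele[of i j] ij
    by (simp add: sum_distrib_left[symmetric])
  finally have A: "(\<Sum>k = i..<j. T k) \<le> gm ^ (K - 2 - i) * (w j - w i)" .
  have e: "gm ^ (K - 1 - i) = gm * gm ^ (K - 2 - i)"
  proof -
    have "K - 1 - i = Suc (K - 2 - i)" using ij by auto
    then show ?thesis by simp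
  qed
  have "Gs j - Gs i = s * (\<Sum>k = i..<j. T k)" using Gs_diff ij by simp
  also have "\<dots> \<le> s * (gm ^ (K - 2 - i) * (w j - w i))" using A s_nonneg by (intro mult_left_mono) auto
  also have "\<dots> = (s * gm ^ (K - 1 - i) / gm) * (w j - w i)" using e gm by simp
  finally show ?thesis .
qed

lemma chord_down:
  assumes ji: "j < i" "i < K"
  shows "s * gm ^ (K - 1 - i) * (w i - w j) \<le> Gs i - Gs j"
proof -
  have "(\<Sum>k = j..<i. gm ^ (K - 1 - i) * (w (Suc k) - w k)) \<le> (\<Sum>k = j..<i. T k)"
  proof (intro sum_mono)
    fix k assume k: "k \<in> {j..<i}"
    have "gm ^ (K - 1 - i) \<le> gm ^ (K - 2 - k)" using gm k ji by (intro power_increasing) auto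
    moreover have "0 \<le> w (Suc k) - w k" using w_le[of k "Suc k"] k ji by auto
    ultimately show "gm ^ (K - 1 - i) * (w (Suc k) - w k) \<le> T k" unfolding T_def
      by (intro mult_right_mono) auto
  qed
  moreover have "(\<Sum>k = j..<i. gm ^ (K - 1 - i) * (w (Suc k) - w k)) = gm ^ (K - 1 - i) * (w i - w j)"
    using tele[of j i] ji by (simp add: sum_distrib_left[symmetric])
  ultimately have A: "gm ^ (K - 1 - i) * (w i - w j) \<le> (\<Sum>k = j..<i. T k)" by simp
  have "s * (gm ^ (K - 1 - i) * (w i - w j)) \<le> s * (\<Sum>k = j..<i. T k)"
    using A s_nonneg by (intro mult_left_mono) auto
  also have "\<dots> = Gs i - Gs j" using Gs_diff ji by simp
  finally show ?thesis by (simp add: mult.assoc)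
qed


lemma Gs_mono: "i \<le> j \<Longrightarrow> j < K \<Longrightarrow> Gs i \<le> Gs j"
proof -
  assume ij: "i \<le> j" "j < K"
  have "0 \<le> (\<Sum>k = i..<j. T k)" using T_pos ij by (intro sum_nonneg) (auto intro: less_imp_le)
  then have "0 \<le> s * (\<Sum>k = i..<j. T k)" using s_nonneg by simp
  then show ?thesis using Gs_diff[OF ij(1)] by simp
qed

lemma Gs_bounds: "i < K \<Longrightarrow> 0 \<le> Gs i \<and> Gs i \<le> 1"
proof -
  assume i: "i < K"
  then have i1: "i \<le> K - 1" by simp
  have "K - 1 < K" using K1 by simp
  then show ?thesis using Gs_mono[of 0 i] Gs_mono[OF i1] i Gs0 Gs_top w0 w1 by auto
qed

lemma w_bounds: "i < K \<Longrightarrow> 0 \<le> w i \<and> w i \<le> 1"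
proof -
  assume i: "i < K"
  then have i1: "i \<le> K - 1" by simp
  have "K - 1 < K" using K1 by simp
  then show ?thesis using w_le[of 0 i] w_le[OF i1] i w0 w1 by auto
qed

lemma Gs_ge_w: assumes i: "i < K" shows "w i \<le> Gs i"
proof (cases "i = 0 \<or> i = K - 1")
  case True then show ?thesis using Gs0 Gs_top by auto
next
  case False
  then have i0: "0 < i" and i1: "i < K - 1" using i by auto
  define B where "B = s * gm ^ (K - 1 - i)"
  define d1 where "d1 = w (K - 1) - w i"
  define d0 where "d0 = w i - w 0"
  have d1: "0 < d1" unfolding d1_def using wmono[of i "K - 1"] i1 by auto
  have d0: "0 < d0" unfolding d0_def using wmono[of 0 i] i0 i by auto
  have up: "w (K - 1) - Gs i \<le> (B / gm) * d1"
    using chord_up[of i "K - 1"] i1 Gs_top unfolding B_def d1_def by auto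
  have down: "B * d0 \<le> Gs i - w 0"
    using chord_down[of 0 i] i0 i Gs0 unfolding B_def d0_def by auto
  show ?thesis
  proof (rule ccontr)
    assume "\<not> w i \<le> Gs i"
    then have lt: "Gs i < w i" by simp
    have "1 < B / gm"
    proof (rule ccontr)
      assume "\<not> 1 < B / gm"
      then have "(B / gm) * d1 \<le> 1 * d1" using d1 by (intro mult_right_mono) auto
      then show False using up lt unfolding d1_def by auto
    qed
    then have "1 < B" using gm by (simp add: less_divide_eq)
    then have "1 * d0 < B * d0" using d0 by (intro mult_strict_right_mono) auto
    then show False using down lt unfolding d0_def by auto
  qed
qed

lemma sum_le_pow: "(\<Sum>k = 0..<i. T k) \<le> gm ^ (K - 2) * (w i - w 0)" if "i < K"
proof -
  have "(\<Sum>k = 0..<i. T k) \<le> (\<Sum>k = 0..<i. gm ^ (K - 2) * (w (Suc k) - w k))"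
  proof (intro sum_mono)
    fix k assume k: "k \<in> {0..<i}"
    have "gm ^ (K - 2 - k) \<le> gm ^ (K - 2)" using gm by (intro power_increasing) auto
    moreover have "0 \<le> w (Suc k) - w k" using w_le[of k "Suc k"] k that by auto
    ultimately show "T k \<le> gm ^ (K - 2) * (w (Suc k) - w k)" unfolding T_def
      by (intro mult_right_mono) auto
  qed
  also have "\<dots> = gm ^ (K - 2) * (w i - w 0)" using tele[of 0 i]
    by (simp add: sum_distrib_left[symmetric])
  finally show ?thesis .
qed

lemma sum_lt_pow: "(\<Sum>k = 0..<i. T k) < gm ^ (K - 2) * (w i - w 0)" if "i < K" "2 \<le> i"
proof -
  have "(\<Sum>k = 0..<i. T k) < (\<Sum>k = 0..<i. gm ^ (K - 2) * (w (Suc k) - w k))"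
  proof (intro sum_strict_mono_ex1 ballI)
    fix k assume k: "k \<in> {0..<i}"
    have "gm ^ (K - 2 - k) \<le> gm ^ (K - 2)" using gm by (intro power_increasing) auto
    moreover have "0 \<le> w (Suc k) - w k" using w_le[of k "Suc k"] k that by auto
    ultimately show "T k \<le> gm ^ (K - 2) * (w (Suc k) - w k)" unfolding T_def
      by (intro mult_right_mono) auto
  next
    have "gm ^ (K - 2 - 1) < gm ^ (K - 2)" using gm that by (intro power_strict_increasing) auto
    moreover have "0 < w (Suc 1) - w 1" using wmono[of 1 "Suc 1"] that by auto
    ultimately have "T 1 < gm ^ (K - 2) * (w (Suc 1) - w 1)" unfolding T_def
      by (intro mult_strict_right_mono) auto
    then show "\<exists>k\<in>{0..<i}. T k < gm ^ (K - 2) * (w (Suc k) - w k)" using that by (intro bexI[of _ 1]) auto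
  qed simp
  also have "\<dots> = gm ^ (K - 2) * (w i - w 0)" using tele[of 0 i]
    by (simp add: sum_distrib_left[symmetric])
  finally show ?thesis .
qed

lemma sum_ge_diff: "w (K - 1) - w i \<le> (\<Sum>k = i..<K - 1. T k)" if "i < K"
proof -
  have "(\<Sum>k = i..<K - 1. w (Suc k) - w k) \<le> (\<Sum>k = i..<K - 1. T k)"
  proof (intro sum_mono)
    fix k assume k: "k \<in> {i..<K - 1}"
    have "1 \<le> gm ^ (K - 2 - k)" using gm by (intro one_le_power) auto
    moreover have "0 \<le> w (Suc k) - w k" using w_le[of k "Suc k"] k that by auto
    ultimately show "w (Suc k) - w k \<le> T k" unfolding T_def
      using mult_right_mono[of 1 "gm ^ (K - 2 - k)" "w (Suc k) - w k"] by auto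
  qed
  then show ?thesis using tele[of i "K - 1"] that by simp
qed

lemma sum_gt_diff: "w (K - 1) - w 1 < (\<Sum>k = 1..<K - 1. T k)" if "4 \<le> K"
proof -
  have "(\<Sum>k = 1..<K - 1. w (Suc k) - w k) < (\<Sum>k = 1..<K - 1. T k)"
  proof (intro sum_strict_mono_ex1 ballI)
    fix k assume k: "k \<in> {1..<K - 1}"
    have "1 \<le> gm ^ (K - 2 - k)" using gm by (intro one_le_power) auto
    moreover have "0 \<le> w (Suc k) - w k" using w_le[of k "Suc k"] k that by auto
    ultimately show "w (Suc k) - w k \<le> T k" unfolding T_def
      using mult_right_mono[of 1 "gm ^ (K - 2 - k)" "w (Suc k) - w k"] by auto
  next
    have "gm ^ 0 < gm ^ (K - 2 - 1)" using gm that by (intro power_strict_increasing) auto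
    moreover have "0 < w (Suc 1) - w 1" using wmono[of 1 "Suc 1"] that by auto
    ultimately have "1 * (w (Suc 1) - w 1) < T 1" unfolding T_def
      by (intro mult_strict_right_mono) auto
    then show "\<exists>k\<in>{1..<K - 1}. w (Suc k) - w k < T k" using that by (intro bexI[of _ 1]) auto
  qed simp
  then show ?thesis using tele[of 1 "K - 1"] that by simp
qed

lemma odds_gen:
  assumes i: "0 < i" "i < K - 1"
    and dn: "Gs i - w 0 \<le> s * gm ^ (K - 2) * (w i - w 0)"
    and upb: "s * (w (K - 1) - w i) \<le> w (K - 1) - Gs i"
  shows "Gs i \<le> s * gm ^ (K - 2) * w i" "s * (1 - w i) \<le> 1 - Gs i"
proof -
  define X where "X = s * gm ^ (K - 2)"
  have iK: "i < K" using i by auto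
  have wi: "w 0 < w i" "w i < w (K - 1)" using wmono[of 0 i] wmono[of i "K - 1"] i by auto
  have ge: "w i \<le> Gs i" using Gs_ge_w[OF iK] .
  have X1: "1 \<le> X"
  proof (rule ccontr)
    assume "\<not> 1 \<le> X"
    then have "X * (w i - w 0) < 1 * (w i - w 0)" using wi by (intro mult_strict_right_mono) auto
    then show False using dn ge unfolding X_def by auto
  qed
  have s1: "s \<le> 1"
  proof (rule ccontr)
    assume "\<not> s \<le> 1"
    then have "1 * (w (K - 1) - w i) < s * (w (K - 1) - w i)" using wi by (intro mult_strict_right_mono) auto
    then show False using upb ge by auto
  qed
  have "(X - 1) * w 0 \<ge> 0" using X1 w0 by auto
  then show "Gs i \<le> s * gm ^ (K - 2) * w i" using dn unfolding X_def by (simp add: algebra_simps)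
  have "(1 - s) * (1 - w (K - 1)) \<ge> 0" using s1 w1 by auto
  then show "s * (1 - w i) \<le> 1 - Gs i" using upb by (simp add: algebra_simps)
qed

lemma dn_bound: "i < K \<Longrightarrow> Gs i - w 0 \<le> s * gm ^ (K - 2) * (w i - w 0)"
  using mult_left_mono[OF sum_le_pow s_nonneg] unfolding Gs_def by (simp add: mult.assoc)

lemma up_bound: "i < K \<Longrightarrow> s * (w (K - 1) - w i) \<le> w (K - 1) - Gs i"
proof -
  assume i: "i < K"
  have "s * (w (K - 1) - w i) \<le> s * (\<Sum>k = i..<K - 1. T k)"
    using sum_ge_diff[OF i] s_nonneg by (intro mult_left_mono) auto
  also have "\<dots> = Gs (K - 1) - Gs i" using Gs_diff[of i "K - 1"] i by simp
  finally show ?thesis using Gs_top by simp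
qed

lemma odds: assumes i: "i < K" shows "Gs i * (1 - w i) \<le> gm ^ (K - 2) * w i * (1 - Gs i)"
proof (cases "i = 0 \<or> i = K - 1")
  case True
  then have e: "Gs i = w i" using Gs0 Gs_top by auto
  have wb: "0 \<le> w i" "w i \<le> 1" using w_bounds[OF i] by auto
  have "0 \<le> w i * (1 - w i)" using wb by auto
  moreover have "1 \<le> gm ^ (K - 2)" using gm by (intro one_le_power) auto
  ultimately have "1 * (w i * (1 - w i)) \<le> gm ^ (K - 2) * (w i * (1 - w i))" by (intro mult_right_mono) auto
  then show ?thesis using e by (simp add: mult.assoc)
next
  case False
  then have i0: "0 < i" and i1: "i < K - 1" using i by auto
  note o = odds_gen[OF i0 i1 dn_bound[OF i] up_bound[OF i]]
  have wb: "0 \<le> w i" "w i \<le> 1" using w_bounds[OF i] by auto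
  have "Gs i * (1 - w i) \<le> (s * gm ^ (K - 2) * w i) * (1 - w i)" using o(1) wb by (intro mult_right_mono) auto
  also have "\<dots> = gm ^ (K - 2) * w i * (s * (1 - w i))" by (simp add: algebra_simps)
  also have "\<dots> \<le> gm ^ (K - 2) * w i * (1 - Gs i)" using o(2) wb gm by (intro mult_left_mono) auto
  finally show ?thesis .
qed

lemma odds_strict:
  assumes K4: "4 \<le> K" and i: "0 < i" "i < K - 1"
  shows "Gs i * (1 - w i) < gm ^ (K - 2) * w i * (1 - Gs i)"
proof -
  have iK: "i < K" using i by auto
  note o = odds_gen[OF i dn_bound[OF iK] up_bound[OF iK]]
  have wi: "w 0 < w i" "w i < w (K - 1)" using wmono[of 0 i] wmono[of i "K - 1"] i by auto
  have wb: "0 < w i" "w i < 1" using wi w0 w1 by auto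
  have sp: "0 < s" using s_pos K4 by auto
  have gp: "0 < gm ^ (K - 2)" using gm by auto
  show ?thesis
  proof (cases "2 \<le> i")
    case True
    have "s * (\<Sum>k = 0..<i. T k) < s * (gm ^ (K - 2) * (w i - w 0))"
      using sum_lt_pow[OF iK True] sp by (intro mult_strict_left_mono) auto
    then have "Gs i - w 0 < s * gm ^ (K - 2) * (w i - w 0)" unfolding Gs_def by (simp add: mult.assoc)
    moreover have "(s * gm ^ (K - 2) - 1) * w 0 \<ge> 0"
    proof -
      have "w i - w 0 \<le> Gs i - w 0" using Gs_ge_w[OF iK] by simp
      also have "\<dots> \<le> s * gm ^ (K - 2) * (w i - w 0)" using dn_bound[OF iK] .
      finally have "1 * (w i - w 0) \<le> (s * gm ^ (K - 2)) * (w i - w 0)" by simp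
      then have "1 \<le> s * gm ^ (K - 2)" using wi by (simp add: mult_le_cancel_right)
      then show ?thesis using w0 by auto
    qed
    ultimately have lt: "Gs i < s * gm ^ (K - 2) * w i" by (simp add: algebra_simps)
    have "Gs i * (1 - w i) < (s * gm ^ (K - 2) * w i) * (1 - w i)" using lt wb by (intro mult_strict_right_mono) auto
    also have "\<dots> = gm ^ (K - 2) * w i * (s * (1 - w i))" by (simp add: algebra_simps)
    also have "\<dots> \<le> gm ^ (K - 2) * w i * (1 - Gs i)" using o(2) wb gp by (intro mult_left_mono) auto
    finally show ?thesis .
  next
    case False
    then have i1: "i = 1" using i by auto
    have "s * (w (K - 1) - w 1) < s * (\<Sum>k = 1..<K - 1. T k)"
      using sum_gt_diff[OF K4] sp by (intro mult_strict_left_mono) auto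
    also have "\<dots> = Gs (K - 1) - Gs 1" using Gs_diff[of 1 "K - 1"] K4 by simp
    finally have "s * (w (K - 1) - w 1) < w (K - 1) - Gs 1" using Gs_top by simp
    moreover have "s \<le> 1"
    proof (rule ccontr)
      assume "\<not> s \<le> 1"
      then have "1 * (w (K - 1) - w i) < s * (w (K - 1) - w i)" using wi by (intro mult_strict_right_mono) auto
      then show False using up_bound[OF iK] Gs_ge_w[OF iK] by auto
    qed
    moreover have "0 \<le> (1 - s) * (1 - w (K - 1))" using w1 by (intro mult_nonneg_nonneg) (auto simp: \<open>s \<le> 1\<close>)
    ultimately have lt: "s * (1 - w i) < 1 - Gs i" using i1 by (simp add: algebra_simps)
    have "Gs i * (1 - w i) \<le> (s * gm ^ (K - 2) * w i) * (1 - w i)" using o(1) wb by (intro mult_right_mono) auto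
    also have "\<dots> = gm ^ (K - 2) * w i * (s * (1 - w i))" by (simp add: algebra_simps)
    also have "\<dots> < gm ^ (K - 2) * w i * (1 - Gs i)" using lt wb gp by (intro mult_strict_left_mono) auto
    finally show ?thesis .
  qed
qed

end


definition Bfun :: "real \<Rightarrow> real \<Rightarrow> real" where
  "Bfun p c = (if c > kappa p then 1 - (2 * sqrt (p * (1 - p) * c) - 1) / (c - 1) else max p (1 - p))"

lemma kappa_ge: "0 < p \<Longrightarrow> p < 1 \<Longrightarrow> p / (1 - p) \<le> kappa p \<and> (1 - p) / p \<le> kappa p"
  unfolding kappa_def by auto

lemma key_le:
  fixes p c u w :: real
  assumes h: "w * (1 - u) \<le> c * u * (1 - w)"
  shows "w * (1 + (c - 1) * u) \<le> c * u"
  using h by (simp add: algebra_simps)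

lemma key_lt:
  fixes p c u w :: real
  assumes h: "w * (1 - u) < c * u * (1 - w)"
  shows "w * (1 + (c - 1) * u) < c * u"
  using h by (simp add: algebra_simps)

lemma big_case:
  fixes p c u w :: real
  assumes p: "0 < p" "p < 1" and c: "1 < c" and u: "0 \<le> u" "u \<le> 1"
    and wD: "w * (1 + (c - 1) * u) \<le> c * u"
  shows "(c - 1) * (p * w + (1 - p) * (1 - u)) * (1 + (c - 1) * u) + ((1 - p) * (1 + (c - 1) * u) - sqrt (p * (1 - p) * c))^2 / (1 - p)
         + (c - 1) * p * (c * u - w * (1 + (c - 1) * u))
         = (c - 2 * sqrt (p * (1 - p) * c)) * (1 + (c - 1) * u)"
proof -
  define r where "r = sqrt (p * (1 - p) * c)"
  define D where "D = 1 + (c - 1) * u"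
  have r2: "r^2 = p * (1 - p) * c" unfolding r_def using p c by (simp add: mult_nonneg_nonneg)
  have sq: "((1 - p) * D - r)^2 / (1 - p) = (1 - p) * D^2 - 2 * r * D + p * c"
  proof -
    have "((1 - p) * D - r)^2 = (1 - p) * ((1 - p) * D^2 - 2 * r * D + p * c)"
      using r2 by (simp add: power2_eq_square algebra_simps)
    then show ?thesis using p by simp
  qed
  have "(c - 1) * (p * w + (1 - p) * (1 - u)) * D + ((1 - p) * D - r)^2 / (1 - p) + (c - 1) * p * (c * u - w * D)
        = (c - 2 * r) * D"
    unfolding sq unfolding D_def by (simp add: algebra_simps power2_eq_square)
  then show ?thesis unfolding r_def D_def .
qed

lemma bound_main:
  fixes p c u w :: real
  assumes p: "0 < p" "p < 1" and c: "1 \<le> c" and u: "0 \<le> u" "u \<le> 1" and w: "0 \<le> w" "w \<le> 1"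
    and h: "w * (1 - u) \<le> c * u * (1 - w)"
  shows "p * w + (1 - p) * (1 - u) \<le> Bfun p c"
    and "c > kappa p \<Longrightarrow> (w * (1 - u) < c * u * (1 - w) \<or> u = 0 \<or> u = 1) \<Longrightarrow> p * w + (1 - p) * (1 - u) < Bfun p c"
proof -
  define D where "D = 1 + (c - 1) * u"
  have D1: "1 \<le> D" unfolding D_def using c u by auto
  have Dc: "D \<le> c" unfolding D_def using c u mult_left_mono[of u 1 "c - 1"] by auto
  have wD: "w * D \<le> c * u" unfolding D_def using key_le[OF h] .
  have gen: "p * w + (1 - p) * (1 - u) \<le> Bfun p c \<and>
       (c > kappa p \<longrightarrow> (w * (1 - u) < c * u * (1 - w) \<or> u = 0 \<or> u = 1) \<longrightarrow> p * w + (1 - p) * (1 - u) < Bfun p c)"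
  proof (cases "c > kappa p")
    case True
    have "1 \<le> kappa p"
    proof (cases "p \<le> 1/2")
      case True then have "1 \<le> (1 - p) / p" using p by (simp add: field_simps)
      then show ?thesis unfolding kappa_def by simp
    next
      case False then have "1 \<le> p / (1 - p)" using p by (simp add: field_simps)
      then show ?thesis unfolding kappa_def by simp
    qed
    then have c1: "1 < c" using True by simp
    define r where "r = sqrt (p * (1 - p) * c)"
    have Bv: "Bfun p c = 1 - (2 * r - 1) / (c - 1)" unfolding Bfun_def r_def using True by simp
    have eq: "(c - 1) * (p * w + (1 - p) * (1 - u)) * D + ((1 - p) * D - r)^2 / (1 - p) + (c - 1) * p * (c * u - w * D)
        = (c - 2 * r) * D"
      using big_case[OF p c1 u wD[unfolded D_def]] unfolding D_def r_def .
    have t1: "0 \<le> ((1 - p) * D - r)^2 / (1 - p)" using p by simp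
    have t2: "0 \<le> (c - 1) * p * (c * u - w * D)" using c1 p wD by (intro mult_nonneg_nonneg) auto
    have Dp: "0 < D" using D1 by simp
    have rel: "(1 - (2 * r - 1) / (c - 1)) * (c - 1) = c - 2 * r" using c1 by (simp add: field_simps)
    have le1: "(c - 1) * (p * w + (1 - p) * (1 - u)) * D \<le> (c - 2 * r) * D" using eq t1 t2 by linarith
    then have le2: "(c - 1) * (p * w + (1 - p) * (1 - u)) \<le> (c - 2 * r)" using Dp
      by (simp add: mult_le_cancel_right)
    have le3: "p * w + (1 - p) * (1 - u) \<le> 1 - (2 * r - 1) / (c - 1)"
    proof -
      have "(p * w + (1 - p) * (1 - u)) * (c - 1) \<le> (1 - (2 * r - 1) / (c - 1)) * (c - 1)"
        using le2 rel by (simp add: mult.commute)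
      then show ?thesis using c1 by (simp add: mult_le_cancel_right)
    qed
    have strict: "p * w + (1 - p) * (1 - u) < Bfun p c"
      if hs: "w * (1 - u) < c * u * (1 - w) \<or> u = 0 \<or> u = 1"
    proof -
      have "0 < ((1 - p) * D - r)^2 / (1 - p) \<or> 0 < (c - 1) * p * (c * u - w * D)"
      proof (cases "w * (1 - u) < c * u * (1 - w)")
        case True
        then have "w * D < c * u" unfolding D_def using key_lt by blast
        then show ?thesis using c1 p by (intro disjI2 mult_pos_pos) auto
      next
        case False
        then have u01: "u = 0 \<or> u = 1" using hs by auto
        have r2: "r^2 = p * (1 - p) * c" unfolding r_def using p c by (simp add: mult_nonneg_nonneg)
        have "(1 - p) * D \<noteq> r"
        proof
          assume e: "(1 - p) * D = r"
          then have e2: "((1 - p) * D)^2 = p * (1 - p) * c" using r2 by simp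
          show False
          proof (cases "u = 0")
            case True
            then have "D = 1" unfolding D_def by simp
            then have "(1 - p) * (1 - p) = p * (1 - p) * c" using e2 by (simp add: power2_eq_square)
            then have "1 - p = p * c" using p by simp
            then have "c = (1 - p) / p" using p by (simp add: field_simps)
            then show False using True kappa_ge[OF p] \<open>c > kappa p\<close> by auto
          next
            case False
            then have "u = 1" using u01 by simp
            then have "D = c" unfolding D_def by simp
            then have "(1 - p) * c * ((1 - p) * c) = p * (1 - p) * c" using e2 by (simp add: power2_eq_square)
            then have e3: "((1 - p) * c) * ((1 - p) * c) = p * ((1 - p) * c)" by (simp add: mult_ac)
            have nz: "(1 - p) * c \<noteq> 0" using p c1 by simp
            have "(1 - p) * c = p" using e3 mult_right_cancel[OF nz] by blast
            then have "c = p / (1 - p)" using p by (simp add: field_simps)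
            then show False using kappa_ge[OF p] \<open>c > kappa p\<close> by auto
          qed
        qed
        then have "0 < ((1 - p) * D - r)^2" by simp
        then show ?thesis using p by (intro disjI1 divide_pos_pos) auto
      qed
      then have "(c - 1) * (p * w + (1 - p) * (1 - u)) * D < (c - 2 * r) * D" using eq t1 t2 by linarith
      then have "(c - 1) * (p * w + (1 - p) * (1 - u)) < (c - 2 * r)" using Dp
        by (simp add: mult_less_cancel_right)
      then have "(p * w + (1 - p) * (1 - u)) * (c - 1) < (1 - (2 * r - 1) / (c - 1)) * (c - 1)"
        using rel by (simp add: mult.commute)
      then show ?thesis using c1 Bv by (simp add: mult_less_cancel_right)
    qed
    show ?thesis using le3 Bv strict by auto
  next
    case False
    then have Bv: "Bfun p c = max p (1 - p)" unfolding Bfun_def by simp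
    have "c \<le> p / (1 - p) \<or> c \<le> (1 - p) / p" using False unfolding kappa_def by auto
    then have "p * w + (1 - p) * (1 - u) \<le> max p (1 - p)"
    proof
      assume cp: "c \<le> p / (1 - p)"
      then have cp': "(1 - p) * c \<le> p" using p by (simp add: field_simps)
      have "p * w * D \<le> p * c * u" using wD p by (simp add: mult.assoc mult_left_mono)
      moreover have "(1 - u) * ((1 - p) * D - p) \<le> 0"
      proof -
        have "(1 - p) * D \<le> (1 - p) * c" using Dc p by (intro mult_left_mono) auto
        then show ?thesis using cp' u by (intro mult_nonneg_nonpos) auto
      qed
      ultimately have "(p * w + (1 - p) * (1 - u)) * D \<le> p * D"
        unfolding D_def by (simp add: algebra_simps)
      then have "p * w + (1 - p) * (1 - u) \<le> p" using D1 by (simp add: mult_le_cancel_right)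
      then show ?thesis by simp
    next
      assume cp: "c \<le> (1 - p) / p"
      then have cp': "p * c \<le> 1 - p" using p by (simp add: field_simps)
      have "p * w * D \<le> p * c * u" using wD p by (simp add: mult.assoc mult_left_mono)
      moreover have "u * (p * c - (1 - p) * D) \<le> 0"
      proof -
        have "(1 - p) * 1 \<le> (1 - p) * D" using D1 p by (intro mult_left_mono) auto
        then show ?thesis using cp' u by (intro mult_nonneg_nonpos) auto
      qed
      ultimately have "(p * w + (1 - p) * (1 - u)) * D \<le> (1 - p) * D"
        unfolding D_def by (simp add: algebra_simps)
      then have "p * w + (1 - p) * (1 - u) \<le> 1 - p" using D1 by (simp add: mult_le_cancel_right)
      then show ?thesis by simp
    qed
    then show ?thesis using Bv False by simp
  qed
  then show "p * w + (1 - p) * (1 - u) \<le> Bfun p c" by simp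
  show "c > kappa p \<Longrightarrow> (w * (1 - u) < c * u * (1 - w) \<or> u = 0 \<or> u = 1) \<Longrightarrow> p * w + (1 - p) * (1 - u) < Bfun p c"
    using gen by blast
qed


definition PP :: "(theta \<Rightarrow> 's::finite \<Rightarrow> real) \<Rightarrow> (nat \<Rightarrow> 's \<Rightarrow> nat \<Rightarrow> real) \<Rightarrow> theta \<Rightarrow> nat \<Rightarrow> nat \<Rightarrow> real" where
  "PP \<pi> f th x j = (\<Sum>s\<in>UNIV. \<pi> th s * f x s j)"

fun vit :: "nat \<Rightarrow> (theta \<Rightarrow> 's::finite \<Rightarrow> real) \<Rightarrow> (nat \<Rightarrow> 's \<Rightarrow> nat \<Rightarrow> real) \<Rightarrow> (nat \<Rightarrow> real) \<Rightarrow> theta \<Rightarrow> nat \<Rightarrow> nat \<Rightarrow> real" where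
  "vit m \<pi> f a th 0 x = 0"
| "vit m \<pi> f a th (Suc n) x = (if absorbing f x then a x else max (a x) (\<Sum>j\<in>{1..m}. PP \<pi> f th x j * vit m \<pi> f a th n j))"

locale proto =
  fixes m :: nat and \<pi> :: "theta \<Rightarrow> 's::finite \<Rightarrow> real" and f :: "nat \<Rightarrow> 's \<Rightarrow> nat \<Rightarrow> real"
  assumes pi_pos: "\<And>th s. 0 < \<pi> th s"
    and pi_sum: "\<And>th. (\<Sum>s\<in>UNIV. \<pi> th s) = 1"
    and f_nonneg: "\<And>i s j. i \<in> {1..m} \<Longrightarrow> j \<in> {1..m} \<Longrightarrow> 0 \<le> f i s j"
    and f_sum: "\<And>i s. i \<in> {1..m} \<Longrightarrow> (\<Sum>j\<in>{1..m}. f i s j) = 1"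
begin

abbreviation "P \<equiv> PP \<pi> f"

lemma P_nonneg: "x \<in> {1..m} \<Longrightarrow> j \<in> {1..m} \<Longrightarrow> 0 \<le> P th x j"
  unfolding PP_def by (intro sum_nonneg mult_nonneg_nonneg) (auto intro: less_imp_le pi_pos f_nonneg)

lemma P_sum: "x \<in> {1..m} \<Longrightarrow> (\<Sum>j\<in>{1..m}. P th x j) = 1"
proof -
  assume x: "x \<in> {1..m}"
  have "(\<Sum>j\<in>{1..m}. P th x j) = (\<Sum>j\<in>{1..m}. \<Sum>s\<in>UNIV. \<pi> th s * f x s j)"
    unfolding PP_def ..
  also have "\<dots> = (\<Sum>s\<in>UNIV. \<Sum>j\<in>{1..m}. \<pi> th s * f x s j)" by (rule sum.swap)
  also have "\<dots> = (\<Sum>s\<in>UNIV. \<pi> th s * (\<Sum>j\<in>{1..m}. f x s j))"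
    by (simp add: sum_distrib_left)
  also have "\<dots> = 1" using f_sum[OF x] pi_sum by simp
  finally show ?thesis .
qed

lemma P_endval: "(\<Sum>s\<in>UNIV. \<pi> th s * (\<Sum>j\<in>{1..m}. f x s j * h j)) = (\<Sum>j\<in>{1..m}. P th x j * h j)"
proof -
  have "(\<Sum>s\<in>UNIV. \<pi> th s * (\<Sum>j\<in>{1..m}. f x s j * h j)) = (\<Sum>s\<in>UNIV. \<Sum>j\<in>{1..m}. \<pi> th s * f x s j * h j)"
    by (simp add: sum_distrib_left mult.assoc)
  also have "\<dots> = (\<Sum>j\<in>{1..m}. \<Sum>s\<in>UNIV. \<pi> th s * f x s j * h j)" by (rule sum.swap)
  also have "\<dots> = (\<Sum>j\<in>{1..m}. P th x j * h j)"
    unfolding PP_def by (simp add: sum_distrib_right)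
  finally show ?thesis .
qed

lemma endval_Suc: "endval m \<pi> f \<sigma> u th (Suc n) x =
     (if absorbing f x then u x
      else \<sigma> x th * u x + (1 - \<sigma> x th) * (\<Sum>j\<in>{1..m}. P th x j * endval m \<pi> f \<sigma> u th n j))"
  by (simp only: endval.simps(2) P_endval)

lemma ratio_le: "\<pi> H s / \<pi> L s \<le> lbar \<pi>"
  unfolding lbar_def by (rule Max_ge) auto

lemma ratio_ge: "lunder \<pi> \<le> \<pi> H s / \<pi> L s"
  unfolding lunder_def by (rule Min_le) auto

lemma P_H_le: "x \<in> {1..m} \<Longrightarrow> j \<in> {1..m} \<Longrightarrow> P H x j \<le> lbar \<pi> * P L x j"
proof -
  assume x: "x \<in> {1..m}" and j: "j \<in> {1..m}"
  have "P H x j = (\<Sum>s\<in>UNIV. (\<pi> H s / \<pi> L s) * (\<pi> L s * f x s j))"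
    unfolding PP_def using pi_pos by (intro sum.cong) (auto simp: field_simps less_imp_neq[symmetric])
  also have "\<dots> \<le> (\<Sum>s\<in>UNIV. lbar \<pi> * (\<pi> L s * f x s j))"
    by (intro sum_mono mult_right_mono ratio_le mult_nonneg_nonneg f_nonneg[OF x j]) (auto intro: less_imp_le pi_pos)
  also have "\<dots> = lbar \<pi> * P L x j" unfolding PP_def by (simp add: sum_distrib_left)
  finally show ?thesis .
qed

lemma P_H_ge: "x \<in> {1..m} \<Longrightarrow> j \<in> {1..m} \<Longrightarrow> lunder \<pi> * P L x j \<le> P H x j"
proof -
  assume x: "x \<in> {1..m}" and j: "j \<in> {1..m}"
  have "lunder \<pi> * P L x j = (\<Sum>s\<in>UNIV. lunder \<pi> * (\<pi> L s * f x s j))"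
    unfolding PP_def by (simp add: sum_distrib_left)
  also have "\<dots> \<le> (\<Sum>s\<in>UNIV. (\<pi> H s / \<pi> L s) * (\<pi> L s * f x s j))"
    by (intro sum_mono mult_right_mono ratio_ge mult_nonneg_nonneg f_nonneg[OF x j]) (auto intro: less_imp_le pi_pos)
  also have "\<dots> = P H x j"
    unfolding PP_def using pi_pos by (intro sum.cong) (auto simp: field_simps less_imp_neq[symmetric])
  finally show ?thesis .
qed


definition closedP :: "theta \<Rightarrow> nat set \<Rightarrow> bool" where
  "closedP th Z \<longleftrightarrow> (\<forall>x\<in>Z. \<forall>j\<in>{1..m}. 0 < P th x j \<longrightarrow> j \<in> Z)"

lemma argmax_closed:
  assumes Z: "Z \<subseteq> {1..m}" "Z \<noteq> {}" "closedP th Z"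
    and sub: "\<And>x. x \<in> Z \<Longrightarrow> \<psi> x = Max (\<psi> ` Z) \<Longrightarrow> \<psi> x \<le> (\<Sum>j\<in>{1..m}. P th x j * \<psi> j)"
  shows "{x\<in>Z. \<psi> x = Max (\<psi> ` Z)} \<noteq> {}" "closedP th {x\<in>Z. \<psi> x = Max (\<psi> ` Z)}"
proof -
  have finZ: "finite Z" using Z(1) finite_subset by blast
  define M where "M = Max (\<psi> ` Z)"
  have le: "\<psi> j \<le> M" if "j \<in> Z" for j unfolding M_def using finZ that by auto
  have "M \<in> \<psi> ` Z" unfolding M_def using finZ Z(2) by (intro Max_in) auto
  then show "{x\<in>Z. \<psi> x = Max (\<psi> ` Z)} \<noteq> {}" unfolding M_def by auto
  show "closedP th {x\<in>Z. \<psi> x = Max (\<psi> ` Z)}"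
    unfolding closedP_def
  proof (intro ballI impI)
    fix x j assume x: "x \<in> {x\<in>Z. \<psi> x = Max (\<psi> ` Z)}" and j: "j \<in> {1..m}" and pj: "0 < P th x j"
    have xZ: "x \<in> Z" and xM: "\<psi> x = M" using x unfolding M_def by auto
    have xm: "x \<in> {1..m}" using xZ Z(1) by auto
    have out0: "P th x k = 0" if "k \<in> {1..m} - Z" for k
    proof -
      have "\<not> 0 < P th x k" using Z(3) xZ that unfolding closedP_def by auto
      thus ?thesis using P_nonneg[OF xm, of k th] that by auto
    qed
    have s1: "(\<Sum>k\<in>{1..m}. P th x k * \<psi> k) = (\<Sum>k\<in>Z. P th x k * \<psi> k)"
      using out0 Z(1) by (intro sum.mono_neutral_right) auto
    have s2: "(\<Sum>k\<in>Z. P th x k) = 1"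
      using P_sum[OF xm, of th] out0 Z(1) sum.mono_neutral_right[of "{1..m}" Z "P th x"] by auto
    have "(\<Sum>k\<in>Z. P th x k * (M - \<psi> k)) = M * (\<Sum>k\<in>Z. P th x k) - (\<Sum>k\<in>Z. P th x k * \<psi> k)"
      by (simp add: algebra_simps sum_subtractf sum_distrib_left)
    also have "\<dots> \<le> 0" using s1 s2 sub[OF xZ] xM unfolding M_def by simp
    finally have "(\<Sum>k\<in>Z. P th x k * (M - \<psi> k)) \<le> 0" .
    moreover have nn: "\<forall>k\<in>Z. 0 \<le> P th x k * (M - \<psi> k)"
      using le P_nonneg[OF xm] Z(1) by (auto intro!: mult_nonneg_nonneg)
    moreover have "0 \<le> (\<Sum>k\<in>Z. P th x k * (M - \<psi> k))"
      using nn by (intro sum_nonneg) auto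
    ultimately have "(\<Sum>k\<in>Z. P th x k * (M - \<psi> k)) = 0"
      by linarith
    then have "\<forall>k\<in>Z. P th x k * (M - \<psi> k) = 0"
      using sum_nonneg_eq_0_iff[OF finZ, of "\<lambda>k. P th x k * (M - \<psi> k)"] nn by simp
    moreover have jZ: "j \<in> Z"
    proof (rule ccontr)
      assume "j \<notin> Z" thus False using out0[of j] j pj by auto
    qed
    ultimately have "\<psi> j = M" using pj by auto
    then show "j \<in> {x\<in>Z. \<psi> x = Max (\<psi> ` Z)}" using jZ unfolding M_def by auto
  qed
qed


lemma sumP_bounds:
  assumes x: "x \<in> {1..m}" and h: "\<And>j. j \<in> {1..m} \<Longrightarrow> 0 \<le> h j \<and> h j \<le> 1"
  shows "0 \<le> (\<Sum>j\<in>{1..m}. P th x j * h j)" "(\<Sum>j\<in>{1..m}. P th x j * h j) \<le> 1"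
proof -
  show "0 \<le> (\<Sum>j\<in>{1..m}. P th x j * h j)"
    using h P_nonneg[OF x] by (intro sum_nonneg mult_nonneg_nonneg) auto
  have "(\<Sum>j\<in>{1..m}. P th x j * h j) \<le> (\<Sum>j\<in>{1..m}. P th x j * 1)"
    using h P_nonneg[OF x] by (intro sum_mono mult_left_mono) auto
  then show "(\<Sum>j\<in>{1..m}. P th x j * h j) \<le> 1" using P_sum[OF x] by simp
qed


definition lv :: "(nat \<Rightarrow> theta \<Rightarrow> real) \<Rightarrow> (nat \<Rightarrow> real) \<Rightarrow> theta \<Rightarrow> nat \<Rightarrow> real" where
  "lv \<sigma> u th x = lim (\<lambda>n. endval m \<pi> f \<sigma> u th n x)"

declare endval.simps(2)[simp del]
declare endval_Suc[simp]

context
  fixes \<sigma> :: "nat \<Rightarrow> theta \<Rightarrow> real" and u :: "nat \<Rightarrow> real"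
  assumes \<sigma>: "valid_strategy m \<sigma>" and u: "\<And>x. x \<in> {1..m} \<Longrightarrow> 0 \<le> u x \<and> u x \<le> 1"
begin

lemma endval_bounds:
  shows "x \<in> {1..m} \<Longrightarrow> 0 \<le> endval m \<pi> f \<sigma> u th n x \<and> endval m \<pi> f \<sigma> u th n x \<le> 1"
proof (induction n arbitrary: x)
  case 0 then show ?case by simp
next
  case (Suc n)
  have s: "0 \<le> \<sigma> x th" "\<sigma> x th \<le> 1" using \<sigma> Suc.prems unfolding valid_strategy_def by auto
  have b: "0 \<le> (\<Sum>j\<in>{1..m}. P th x j * endval m \<pi> f \<sigma> u th n j)"
          "(\<Sum>j\<in>{1..m}. P th x j * endval m \<pi> f \<sigma> u th n j) \<le> 1"
    using sumP_bounds[OF Suc.prems Suc.IH] by auto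
  have u0: "0 \<le> u x" "u x \<le> 1" using u Suc.prems by auto
  define A where "A = (\<Sum>j\<in>{1..m}. P th x j * endval m \<pi> f \<sigma> u th n j)"
  have "0 \<le> \<sigma> x th * u x + (1 - \<sigma> x th) * A"
    using s u0 b unfolding A_def by (intro add_nonneg_nonneg mult_nonneg_nonneg) auto
  moreover have "\<sigma> x th * u x + (1 - \<sigma> x th) * A \<le> \<sigma> x th * 1 + (1 - \<sigma> x th) * 1"
    using s u0 b unfolding A_def by (intro add_mono mult_left_mono) auto
  ultimately show ?case using u0 unfolding endval_Suc A_def[symmetric] by auto
qed

lemma endval_mono:
  shows "x \<in> {1..m} \<Longrightarrow> endval m \<pi> f \<sigma> u th n x \<le> endval m \<pi> f \<sigma> u th (Suc n) x"
proof (induction n arbitrary: x)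
  case 0
  have "0 \<le> endval m \<pi> f \<sigma> u th (Suc 0) x" using endval_bounds[OF "0.prems"] by blast
  then show ?case by (simp only: endval.simps(1))
next
  case (Suc n)
  have s: "0 \<le> \<sigma> x th" "\<sigma> x th \<le> 1" using \<sigma> Suc.prems unfolding valid_strategy_def by auto
  have "(\<Sum>j\<in>{1..m}. P th x j * endval m \<pi> f \<sigma> u th n j) \<le> (\<Sum>j\<in>{1..m}. P th x j * endval m \<pi> f \<sigma> u th (Suc n) j)"
    using Suc.IH P_nonneg[OF Suc.prems] by (intro sum_mono mult_left_mono) auto
  then have "(1 - \<sigma> x th) * (\<Sum>j\<in>{1..m}. P th x j * endval m \<pi> f \<sigma> u th n j) \<le> (1 - \<sigma> x th) * (\<Sum>j\<in>{1..m}. P th x j * endval m \<pi> f \<sigma> u th (Suc n) j)"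
    using s by (intro mult_left_mono) auto
  then show ?case by (simp only: endval_Suc) auto
qed

lemma endval_lim:
  assumes x: "x \<in> {1..m}"
  shows "(\<lambda>n. endval m \<pi> f \<sigma> u th n x) \<longlonglongrightarrow> lv \<sigma> u th x"
proof -
  have inc: "incseq (\<lambda>n. endval m \<pi> f \<sigma> u th n x)"
    using endval_mono[OF x] by (simp add: incseq_SucI)
  have bdd: "bdd_above (range (\<lambda>n. endval m \<pi> f \<sigma> u th n x))"
    using endval_bounds[OF x] by (intro bdd_aboveI[of _ 1]) auto
  have "convergent (\<lambda>n. endval m \<pi> f \<sigma> u th n x)"
    using LIMSEQ_incseq_SUP[OF bdd inc] by (auto simp: convergent_def)
  then show ?thesis unfolding lv_def by (simp add: convergent_LIMSEQ_iff)
qed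

lemma lv_bounds:
  assumes x: "x \<in> {1..m}"
  shows "0 \<le> lv \<sigma> u th x" "lv \<sigma> u th x \<le> 1"
  using LIMSEQ_le_const[OF endval_lim[OF x]] LIMSEQ_le_const2[OF endval_lim[OF x]]
    endval_bounds[OF x] by auto

end

lemma majorant:
  assumes \<sigma>: "valid_strategy m \<sigma>"
    and V0: "\<And>x. x \<in> {1..m} \<Longrightarrow> 0 \<le> V x" and Vu: "\<And>x. x \<in> {1..m} \<Longrightarrow> u x \<le> V x"
    and Vex: "\<And>x. x \<in> {1..m} \<Longrightarrow> \<not> absorbing f x \<Longrightarrow> (\<Sum>j\<in>{1..m}. P th x j * V j) \<le> V x"
  shows "x \<in> {1..m} \<Longrightarrow> endval m \<pi> f \<sigma> u th n x \<le> V x"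
proof (induction n arbitrary: x)
  case 0 then show ?case using V0 by simp
next
  case (Suc n)
  have s: "0 \<le> \<sigma> x th" "\<sigma> x th \<le> 1" using \<sigma> Suc.prems unfolding valid_strategy_def by auto
  show ?case
  proof (cases "absorbing f x")
    case True then show ?thesis using Vu[OF Suc.prems] by simp
  next
    case False
    have "(\<Sum>j\<in>{1..m}. P th x j * endval m \<pi> f \<sigma> u th n j) \<le> (\<Sum>j\<in>{1..m}. P th x j * V j)"
      using Suc.IH P_nonneg[OF Suc.prems] by (intro sum_mono mult_left_mono) auto
    also have "\<dots> \<le> V x" using Vex[OF Suc.prems False] .
    finally have A: "(\<Sum>j\<in>{1..m}. P th x j * endval m \<pi> f \<sigma> u th n j) \<le> V x" .
    have "\<sigma> x th * u x + (1 - \<sigma> x th) * (\<Sum>j\<in>{1..m}. P th x j * endval m \<pi> f \<sigma> u th n j)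
          \<le> \<sigma> x th * V x + (1 - \<sigma> x th) * V x"
      using s A Vu[OF Suc.prems] by (intro add_mono mult_left_mono) auto
    then show ?thesis using False by (simp add: algebra_simps)
  qed
qed

lemma lv_majorant:
  assumes \<sigma>: "valid_strategy m \<sigma>" and u: "\<And>x. x \<in> {1..m} \<Longrightarrow> 0 \<le> u x \<and> u x \<le> 1"
    and V0: "\<And>x. x \<in> {1..m} \<Longrightarrow> 0 \<le> V x" and Vu: "\<And>x. x \<in> {1..m} \<Longrightarrow> u x \<le> V x"
    and Vex: "\<And>x. x \<in> {1..m} \<Longrightarrow> \<not> absorbing f x \<Longrightarrow> (\<Sum>j\<in>{1..m}. P th x j * V j) \<le> V x"
    and x: "x \<in> {1..m}"
  shows "lv \<sigma> u th x \<le> V x"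
  using LIMSEQ_le_const2[OF endval_lim[OF \<sigma> u x]] majorant[OF \<sigma> V0 Vu Vex x] by auto


lemma attain:
  assumes \<sigma>: "valid_strategy m \<sigma>" and u: "\<And>x. x \<in> {1..m} \<Longrightarrow> 0 \<le> u x \<and> u x \<le> 1"
    and s01: "\<And>x. x \<in> {1..m} \<Longrightarrow> \<sigma> x th = 0 \<or> \<sigma> x th = 1"
    and C_def: "C = {x\<in>{1..m}. \<not> absorbing f x \<and> \<sigma> x th = 0}"
    and Vle: "\<And>x. x \<in> {1..m} \<Longrightarrow> lv \<sigma> u th x \<le> V x"
    and Voff: "\<And>x. x \<in> {1..m} \<Longrightarrow> x \<notin> C \<Longrightarrow> V x = u x"
    and Von: "\<And>x. x \<in> C \<Longrightarrow> V x = (\<Sum>j\<in>{1..m}. P th x j * V j)"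
  shows "(\<forall>x\<in>{1..m}. lv \<sigma> u th x = V x) \<or> (\<exists>Z. Z \<subseteq> C \<and> Z \<noteq> {} \<and> closedP th Z)"
proof -
  have lim: "(\<lambda>n. endval m \<pi> f \<sigma> u th n x) \<longlonglongrightarrow> lv \<sigma> u th x" if "x \<in> {1..m}" for x
    using endval_lim[of \<sigma> u x th] \<sigma> u that by blast
  have off: "lv \<sigma> u th x = V x" if x: "x \<in> {1..m}" and xC: "x \<notin> C" for x
  proof -
    have "endval m \<pi> f \<sigma> u th (Suc n) x = u x" for n
    proof (cases "absorbing f x")
      case True then show ?thesis by simp
    next
      case False then have "\<sigma> x th = 1" using xC x s01[OF x] C_def by auto
      then show ?thesis using False by simp
    qed
    then have "(\<lambda>n. endval m \<pi> f \<sigma> u th (Suc n) x) \<longlonglongrightarrow> u x" by simp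
    moreover have "(\<lambda>n. endval m \<pi> f \<sigma> u th (Suc n) x) \<longlonglongrightarrow> lv \<sigma> u th x"
      using lim[OF x] by (rule LIMSEQ_Suc)
    ultimately show ?thesis using Voff[OF x xC] LIMSEQ_unique by metis
  qed
  have on: "lv \<sigma> u th x = (\<Sum>j\<in>{1..m}. P th x j * lv \<sigma> u th j)" if xC: "x \<in> C" for x
  proof -
    have x: "x \<in> {1..m}" and na: "\<not> absorbing f x" and s0: "\<sigma> x th = 0" using xC C_def by auto
    have "endval m \<pi> f \<sigma> u th (Suc n) x = (\<Sum>j\<in>{1..m}. P th x j * endval m \<pi> f \<sigma> u th n j)" for n
      using na s0 by simp
    moreover have "(\<lambda>n. (\<Sum>j\<in>{1..m}. P th x j * endval m \<pi> f \<sigma> u th n j)) \<longlonglongrightarrow> (\<Sum>j\<in>{1..m}. P th x j * lv \<sigma> u th j)"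
      by (intro tendsto_sum tendsto_mult_left lim) auto
    ultimately have "(\<lambda>n. endval m \<pi> f \<sigma> u th (Suc n) x) \<longlonglongrightarrow> (\<Sum>j\<in>{1..m}. P th x j * lv \<sigma> u th j)"
      by simp
    moreover have "(\<lambda>n. endval m \<pi> f \<sigma> u th (Suc n) x) \<longlonglongrightarrow> lv \<sigma> u th x"
      using lim[OF x] by (rule LIMSEQ_Suc)
    ultimately show ?thesis using LIMSEQ_unique by metis
  qed
  define e where "e x = V x - lv \<sigma> u th x" for x
  have e0: "0 \<le> e x" if "x \<in> {1..m}" for x using Vle[OF that] unfolding e_def by simp
  have eoff: "e x = 0" if "x \<in> {1..m}" "x \<notin> C" for x using off[OF that] unfolding e_def by simp
  have eon: "e x = (\<Sum>j\<in>{1..m}. P th x j * e j)" if "x \<in> C" for x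
    using Von[OF that] on[OF that] unfolding e_def by (simp add: algebra_simps sum_subtractf)
  show ?thesis
  proof (cases "\<forall>x\<in>{1..m}. e x = 0")
    case True then show ?thesis unfolding e_def by auto
  next
    case False
    then obtain y where y: "y \<in> {1..m}" "e y \<noteq> 0" by auto
    have ne: "{1..m} \<noteq> {}" using y by auto
    have cl: "closedP th {1..m}" unfolding closedP_def by auto
    have sub: "e x \<le> (\<Sum>j\<in>{1..m}. P th x j * e j)" if "x \<in> {1..m}" for x
    proof (cases "x \<in> C")
      case True then show ?thesis using eon by simp
    next
      case False
      have "0 \<le> (\<Sum>j\<in>{1..m}. P th x j * e j)"
        using e0 P_nonneg[OF that] by (intro sum_nonneg mult_nonneg_nonneg) auto
      then show ?thesis using eoff[OF that False] by simp
    qed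
    have hyp: "\<And>x. x \<in> {1..m} \<Longrightarrow> e x = Max (e ` {1..m}) \<Longrightarrow> e x \<le> (\<Sum>j\<in>{1..m}. P th x j * e j)"
      using sub by blast
    note am = argmax_closed[of "{1..m}" th e, OF subset_refl ne cl hyp]
    define Z where "Z = {x\<in>{1..m}. e x = Max (e ` {1..m})}"
    have Zne: "Z \<noteq> {}" and Zcl: "closedP th Z" using am unfolding Z_def by auto
    have "e y \<le> Max (e ` {1..m})" using y by auto
    then have Mpos: "0 < Max (e ` {1..m})" using e0[OF y(1)] y(2) by linarith
    have "Z \<subseteq> C"
    proof
      fix x assume "x \<in> Z"
      then have "x \<in> {1..m}" "e x > 0" using Mpos unfolding Z_def by auto
      then show "x \<in> C" using eoff by force
    qed
    then show ?thesis using Zne Zcl by blast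
  qed
qed


context
  fixes a :: "nat \<Rightarrow> real" and th :: theta
  assumes a: "\<And>x. x \<in> {1..m} \<Longrightarrow> 0 \<le> a x \<and> a x \<le> 1"
begin

lemma vit_bounds: "x \<in> {1..m} \<Longrightarrow> 0 \<le> vit m \<pi> f a th n x \<and> vit m \<pi> f a th n x \<le> 1"
proof (induction n arbitrary: x)
  case 0 then show ?case by simp
next
  case (Suc n)
  have "0 \<le> (\<Sum>j\<in>{1..m}. P th x j * vit m \<pi> f a th n j)" "(\<Sum>j\<in>{1..m}. P th x j * vit m \<pi> f a th n j) \<le> 1"
    using sumP_bounds[of x "vit m \<pi> f a th n" th] Suc.prems Suc.IH by auto
  then show ?case using a[OF Suc.prems] by auto
qed

lemma vit_mono: "x \<in> {1..m} \<Longrightarrow> vit m \<pi> f a th n x \<le> vit m \<pi> f a th (Suc n) x"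
proof (induction n arbitrary: x)
  case 0 then show ?case using vit_bounds[OF "0.prems", of "Suc 0"] by simp
next
  case (Suc n)
  have "(\<Sum>j\<in>{1..m}. P th x j * vit m \<pi> f a th n j) \<le> (\<Sum>j\<in>{1..m}. P th x j * vit m \<pi> f a th (Suc n) j)"
    using Suc.IH P_nonneg[OF Suc.prems] by (intro sum_mono mult_left_mono) auto
  then show ?case by (simp only: vit.simps) auto
qed

definition vs :: "nat \<Rightarrow> real" where "vs x = lim (\<lambda>n. vit m \<pi> f a th n x)"

lemma vit_lim: "x \<in> {1..m} \<Longrightarrow> (\<lambda>n. vit m \<pi> f a th n x) \<longlonglongrightarrow> vs x"
proof -
  assume x: "x \<in> {1..m}"
  have inc: "incseq (\<lambda>n. vit m \<pi> f a th n x)"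
    using vit_mono[OF x] by (simp add: incseq_SucI)
  have bdd: "bdd_above (range (\<lambda>n. vit m \<pi> f a th n x))"
    using vit_bounds[OF x] by (intro bdd_aboveI[of _ 1]) auto
  have "convergent (\<lambda>n. vit m \<pi> f a th n x)"
    using LIMSEQ_incseq_SUP[OF bdd inc] by (auto simp: convergent_def)
  then show ?thesis unfolding vs_def by (simp add: convergent_LIMSEQ_iff)
qed

lemma vs_bounds: "x \<in> {1..m} \<Longrightarrow> 0 \<le> vs x \<and> vs x \<le> 1"
proof -
  assume x: "x \<in> {1..m}"
  show ?thesis
    by (intro conjI LIMSEQ_le_const[OF vit_lim[OF x]] LIMSEQ_le_const2[OF vit_lim[OF x]])
      (use vit_bounds[OF x] in auto)
qed

lemma vit_le_vs: "x \<in> {1..m} \<Longrightarrow> vit m \<pi> f a th n x \<le> vs x"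
proof -
  assume x: "x \<in> {1..m}"
  have inc: "incseq (\<lambda>n. vit m \<pi> f a th n x)" using vit_mono[OF x] by (simp add: incseq_SucI)
  show ?thesis by (rule incseq_le[OF inc vit_lim[OF x]])
qed

lemma vs_eq: "x \<in> {1..m} \<Longrightarrow> vs x = (if absorbing f x then a x else max (a x) (\<Sum>j\<in>{1..m}. P th x j * vs j))"
proof -
  assume x: "x \<in> {1..m}"
  have "(\<lambda>n. vit m \<pi> f a th (Suc n) x) \<longlonglongrightarrow> (if absorbing f x then a x else max (a x) (\<Sum>j\<in>{1..m}. P th x j * vs j))"
  proof (cases "absorbing f x")
    case True then show ?thesis by simp
  next
    case False
    have e: "(\<lambda>n. vit m \<pi> f a th (Suc n) x) = (\<lambda>n. max (a x) (\<Sum>j\<in>{1..m}. P th x j * vit m \<pi> f a th n j))"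
      using False by simp
    have "(\<lambda>n. max (a x) (\<Sum>j\<in>{1..m}. P th x j * vit m \<pi> f a th n j)) \<longlonglongrightarrow> max (a x) (\<Sum>j\<in>{1..m}. P th x j * vs j)"
      by (intro tendsto_max tendsto_const tendsto_sum tendsto_mult_left vit_lim) simp
    then show ?thesis using False e by simp
  qed
  moreover have "(\<lambda>n. vit m \<pi> f a th (Suc n) x) \<longlonglongrightarrow> vs x" using vit_lim[OF x] by (rule LIMSEQ_Suc)
  ultimately show ?thesis by (rule LIMSEQ_unique[rotated])
qed

lemma vs_ge_a: "x \<in> {1..m} \<Longrightarrow> a x \<le> vs x"
proof -
  assume x: "x \<in> {1..m}"
  show ?thesis using vs_eq[OF x] by (cases "absorbing f x") auto
qed

lemma vs_excessive: "x \<in> {1..m} \<Longrightarrow> \<not> absorbing f x \<Longrightarrow> (\<Sum>j\<in>{1..m}. P th x j * vs j) \<le> vs x"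
proof -
  assume x: "x \<in> {1..m}" and na: "\<not> absorbing f x"
  have "vs x = max (a x) (\<Sum>j\<in>{1..m}. P th x j * vs j)" using vs_eq[OF x] na by simp
  then show ?thesis by simp
qed

lemma endval_le_vit:
  assumes \<sigma>: "valid_strategy m \<sigma>"
  shows "x \<in> {1..m} \<Longrightarrow> endval m \<pi> f \<sigma> a th n x \<le> vit m \<pi> f a th n x"
proof (induction n arbitrary: x)
  case 0 then show ?case by simp
next
  case (Suc n)
  have s: "0 \<le> \<sigma> x th" "\<sigma> x th \<le> 1" using \<sigma> Suc.prems unfolding valid_strategy_def by auto
  have A: "(\<Sum>j\<in>{1..m}. P th x j * endval m \<pi> f \<sigma> a th n j) \<le> (\<Sum>j\<in>{1..m}. P th x j * vit m \<pi> f a th n j)"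
    using Suc.IH P_nonneg[OF Suc.prems] by (intro sum_mono mult_left_mono) auto
  define B where "B = max (a x) (\<Sum>j\<in>{1..m}. P th x j * vit m \<pi> f a th n j)"
  have "\<sigma> x th * a x + (1 - \<sigma> x th) * (\<Sum>j\<in>{1..m}. P th x j * endval m \<pi> f \<sigma> a th n j) \<le> \<sigma> x th * B + (1 - \<sigma> x th) * B"
    using s A unfolding B_def by (intro add_mono mult_left_mono) auto
  then show ?case unfolding B_def by (simp add: algebra_simps)
qed

lemma lv_le_vs:
  assumes \<sigma>: "valid_strategy m \<sigma>" and x: "x \<in> {1..m}"
  shows "lv \<sigma> a th x \<le> vs x"
proof -
  have "(\<lambda>n. endval m \<pi> f \<sigma> a th n x) \<longlonglongrightarrow> lv \<sigma> a th x"
    using endval_lim[of \<sigma> a x th] \<sigma> a x by blast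
  moreover have "endval m \<pi> f \<sigma> a th n x \<le> vs x" for n
    using endval_le_vit[OF \<sigma> x, of n] vit_le_vs[OF x, of n] by linarith
  ultimately show ?thesis by (intro LIMSEQ_le_const2) auto
qed

definition sstar :: "nat \<Rightarrow> theta \<Rightarrow> real" where
  "sstar x t = (if vs x \<le> a x then 1 else 0)"

lemma sstar_valid: "valid_strategy m sstar"
  unfolding valid_strategy_def sstar_def by auto

lemma sstar_attains: "x \<in> {1..m} \<Longrightarrow> lv sstar a th x = vs x"
proof -
  assume x0: "x \<in> {1..m}"
  define C where "C = {x\<in>{1..m}. \<not> absorbing f x \<and> sstar x th = 0}"
  have C_alt: "x \<in> C \<longleftrightarrow> x \<in> {1..m} \<and> \<not> absorbing f x \<and> a x < vs x" for x
    unfolding C_def sstar_def by auto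
  have s01: "\<And>x. x \<in> {1..m} \<Longrightarrow> sstar x th = 0 \<or> sstar x th = 1" unfolding sstar_def by auto
  have Vle: "\<And>x. x \<in> {1..m} \<Longrightarrow> lv sstar a th x \<le> vs x" using lv_le_vs[OF sstar_valid] by blast
  have Voff: "\<And>x. x \<in> {1..m} \<Longrightarrow> x \<notin> C \<Longrightarrow> vs x = a x"
  proof -
    fix x assume x: "x \<in> {1..m}" "x \<notin> C"
    show "vs x = a x"
    proof (cases "absorbing f x")
      case True then show ?thesis using vs_eq[OF x(1)] by simp
    next
      case False then show ?thesis using x C_alt[of x] vs_ge_a[OF x(1)] by auto
    qed
  qed
  have Von: "\<And>x. x \<in> C \<Longrightarrow> vs x = (\<Sum>j\<in>{1..m}. P th x j * vs j)"
  proof -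
    fix x assume "x \<in> C"
    then have x: "x \<in> {1..m}" "\<not> absorbing f x" "a x < vs x" using C_alt by auto
    then show "vs x = (\<Sum>j\<in>{1..m}. P th x j * vs j)" using vs_eq[OF x(1)] by (auto simp: max_def split: if_splits)
  qed
  have "\<not> (\<exists>Z. Z \<subseteq> C \<and> Z \<noteq> {} \<and> closedP th Z)"
  proof
    assume "\<exists>Z. Z \<subseteq> C \<and> Z \<noteq> {} \<and> closedP th Z"
    then obtain Z where Z: "Z \<subseteq> C" "Z \<noteq> {}" "closedP th Z" by blast
    have Zm: "Z \<subseteq> {1..m}" using Z(1) C_def by auto
    have hyp: "\<And>x. x \<in> Z \<Longrightarrow> vs x = Max (vs ` Z) \<Longrightarrow> vs x \<le> (\<Sum>j\<in>{1..m}. P th x j * vs j)"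
      using Von Z(1) by auto
    note am = argmax_closed[of Z th vs, OF Zm Z(2) Z(3) hyp]
    define Z' where "Z' = {x\<in>Z. vs x = Max (vs ` Z)}"
    have Z'ne: "Z' \<noteq> {}" and Z'cl: "closedP th Z'" using am unfolding Z'_def by auto
    have Z'C: "Z' \<subseteq> C" using Z(1) unfolding Z'_def by auto
    have finZ': "finite Z'" using Zm unfolding Z'_def by (auto intro: finite_subset)
    define A' where "A' = Max (a ` Z')"
    obtain z where z: "z \<in> Z'" using Z'ne by auto
    have aA: "a x \<le> A'" if "x \<in> Z'" for x unfolding A'_def using finZ' that by auto
    have A'in: "A' \<in> a ` Z'" unfolding A'_def using finZ' Z'ne by (intro Max_in) auto
    have Z'm: "\<And>x. x \<in> Z' \<Longrightarrow> x \<in> {1..m}" using Z'C C_def by auto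
    have A'0: "0 \<le> A'" using aA[OF z] a[OF Z'm[OF z]] by linarith
    have vsZ': "vs x = Max (vs ` Z)" if "x \<in> Z'" for x using that unfolding Z'_def by auto
    obtain z' where z': "z' \<in> Z'" "A' = a z'" using A'in by auto
    have A'lt: "A' < Max (vs ` Z)" using z' C_alt[of z'] Z'C vsZ'[OF z'(1)] by auto
    have vitle: "x \<in> Z' \<Longrightarrow> vit m \<pi> f a th n x \<le> A'" for n x
    proof (induction n arbitrary: x)
      case 0 then show ?case using A'0 by simp
    next
      case (Suc n)
      have xm: "x \<in> {1..m}" and na: "\<not> absorbing f x" using Suc.prems Z'C C_alt by auto
      have "(\<Sum>j\<in>{1..m}. P th x j * vit m \<pi> f a th n j) \<le> (\<Sum>j\<in>{1..m}. P th x j * A')"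
      proof (intro sum_mono)
        fix j assume j: "j \<in> {1..m}"
        show "P th x j * vit m \<pi> f a th n j \<le> P th x j * A'"
        proof (cases "j \<in> Z'")
          case True then show ?thesis using Suc.IH P_nonneg[OF xm j] by (intro mult_left_mono) auto
        next
          case False
          then have "\<not> 0 < P th x j" using Z'cl Suc.prems j unfolding closedP_def by auto
          then have "P th x j = 0" using P_nonneg[OF xm j, of th] by auto
          then show ?thesis by simp
        qed
      qed
      also have "\<dots> = A'" using P_sum[OF xm] by (simp add: sum_distrib_right[symmetric])
      finally show ?case using na aA[OF Suc.prems] by simp
    qed
    have "vs z \<le> A'" by (intro LIMSEQ_le_const2[OF vit_lim[OF Z'm[OF z]]]) (use vitle[OF z] in auto)
    then show False using vsZ'[OF z] A'lt by simp
  qed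
  then have "\<forall>x\<in>{1..m}. lv sstar a th x = vs x"
    using attain[of sstar a th C vs, OF sstar_valid a s01 C_def Vle Voff Von] by blast
  then show ?thesis using x0 by blast
qed

end


lemma transfer:
  assumes gam: "1 < gamma \<pi>" and lu: "0 < lunder \<pi>"
    and v01: "\<And>x. x \<in> {1..m} \<Longrightarrow> 0 \<le> v x \<and> v x \<le> 1"
    and vex: "\<And>x. x \<in> {1..m} \<Longrightarrow> \<not> absorbing f x \<Longrightarrow> (\<Sum>j\<in>{1..m}. P L x j * v j) \<le> v x"
    and m1: "1 \<le> m"
  shows "\<exists>W. (\<forall>x\<in>{1..m}. v x \<le> W x \<and> W x \<le> 1
              \<and> W x * (1 - v x) \<le> gamma \<pi> ^ (card (v ` {1..m}) - 2) * v x * (1 - W x)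
              \<and> (W x = v x \<or> (4 \<le> card (v ` {1..m}) \<longrightarrow> W x * (1 - v x) < gamma \<pi> ^ (card (v ` {1..m}) - 2) * v x * (1 - W x))))
           \<and> (\<forall>x\<in>{1..m}. \<not> absorbing f x \<longrightarrow> (\<Sum>j\<in>{1..m}. P H x j * W j) \<le> W x)"
proof -
  define V where "V = v ` {1..m}"
  define K where "K = card V"
  define l where "l = sorted_list_of_set V"
  define w where "w i = l ! i" for i
  have finV: "finite V" unfolding V_def by simp
  have Vne: "V \<noteq> {}" unfolding V_def using m1 by auto
  have K1: "1 \<le> K" unfolding K_def using finV Vne by (simp add: Suc_le_eq card_gt_0_iff)
  have lset: "set l = V" unfolding l_def using finV by simp
  have llen: "length l = K" unfolding l_def K_def by simp
  have lsort: "sorted_wrt (<) l" unfolding l_def by simp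
  have wmono: "\<And>i j. i < j \<Longrightarrow> j < K \<Longrightarrow> w i < w j"
    unfolding w_def using sorted_wrt_nth_less[OF lsort] llen by auto
  have winV: "\<And>i. i < K \<Longrightarrow> w i \<in> V" unfolding w_def using lset llen by auto
  have Vw: "\<And>y. y \<in> V \<Longrightarrow> \<exists>i<K. w i = y" unfolding w_def using lset llen by (auto simp: in_set_conv_nth)
  have w01: "0 \<le> w i \<and> w i \<le> 1" if iK: "i < K" for i
  proof -
    obtain x where "x \<in> {1..m}" "w i = v x" using winV[OF iK] unfolding V_def by auto
    then show ?thesis using v01 by auto
  qed
  interpret gs: gseq K w "gamma \<pi>"
    by unfold_locales (use K1 wmono w01 gam in auto)
  define idx where "idx x = (SOME i. i < K \<and> w i = v x)" for x
  have idx: "\<And>x. x \<in> {1..m} \<Longrightarrow> idx x < K \<and> w (idx x) = v x"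
  proof -
    fix x assume "x \<in> {1..m}"
    then have "v x \<in> V" unfolding V_def by auto
    then have "\<exists>i. i < K \<and> w i = v x" using Vw by blast
    then show "idx x < K \<and> w (idx x) = v x" unfolding idx_def by (rule someI_ex)
  qed
  have ord: "\<And>i j. i < K \<Longrightarrow> j < K \<Longrightarrow> (w i < w j \<longleftrightarrow> i < j)"
    using wmono by (metis linorder_neqE_nat order_less_asym)
  define W where "W x = gs.Gs (idx x)" for x
  have lbar_eq: "lbar \<pi> = gamma \<pi> * lunder \<pi>" unfolding gamma_def using lu by simp
  have exc: "(\<Sum>j\<in>{1..m}. P H x j * W j) \<le> W x" if x: "x \<in> {1..m}" and na: "\<not> absorbing f x" for x
  proof -
    define i where "i = idx x"
    have i: "i < K" "w i = v x" using idx[OF x] unfolding i_def by auto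
    define B where "B = gs.s * gamma \<pi> ^ (K - 1 - i)"
    have B0: "0 \<le> B" unfolding B_def using gs.s_nonneg gam by simp
    have pt: "P H x j * (W j - W x) \<le> lunder \<pi> * B * (P L x j * (v j - v x))" if j: "j \<in> {1..m}" for j
    proof -
      define k where "k = idx j"
      have k: "k < K" "w k = v j" using idx[OF j] unfolding k_def by auto
      have PH0: "0 \<le> P H x j" using P_nonneg[OF x j] .
      have PL0: "0 \<le> P L x j" using P_nonneg[OF x j] .
      show ?thesis
      proof (cases "i < k")
        case True
        have d: "W j - W x \<le> (B / gamma \<pi>) * (v j - v x)"
          using gs.chord_up[OF True k(1)] k i unfolding W_def B_def k_def i_def by simp
        have e: "0 \<le> v j - v x" using wmono[OF True k(1)] k i by simp
        have "P H x j * (W j - W x) \<le> P H x j * ((B / gamma \<pi>) * (v j - v x))"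
          using d PH0 by (intro mult_left_mono) auto
        also have "\<dots> \<le> (lbar \<pi> * P L x j) * ((B / gamma \<pi>) * (v j - v x))"
          using P_H_le[OF x j] e B0 gam by (intro mult_right_mono) auto
        also have "\<dots> = lunder \<pi> * B * (P L x j * (v j - v x))"
          unfolding lbar_eq using gam by (simp add: field_simps)
        finally show ?thesis .
      next
        case False
        show ?thesis
        proof (cases "k = i")
          case True
          then show ?thesis using k i unfolding W_def k_def i_def by simp
        next
          case False
          then have ki: "k < i" using \<open>\<not> i < k\<close> by simp
          have d: "W j - W x \<le> B * (v j - v x)"
            using gs.chord_down[OF ki i(1)] k i unfolding W_def B_def k_def i_def by (simp add: algebra_simps)
          have e: "v j - v x \<le> 0" using wmono[OF ki i(1)] k i by simp
          have "P H x j * (W j - W x) \<le> P H x j * (B * (v j - v x))"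
            using d PH0 by (intro mult_left_mono) auto
          also have "\<dots> \<le> (lunder \<pi> * P L x j) * (B * (v j - v x))"
          proof -
            have "B * (v j - v x) \<le> 0" using B0 e by (simp add: mult_nonneg_nonpos)
            then show ?thesis using P_H_ge[OF x j] by (intro mult_right_mono_neg) auto
          qed
          also have "\<dots> = lunder \<pi> * B * (P L x j * (v j - v x))" by (simp add: algebra_simps)
          finally show ?thesis .
        qed
      qed
    qed
    have "(\<Sum>j\<in>{1..m}. P H x j * (W j - W x)) \<le> (\<Sum>j\<in>{1..m}. lunder \<pi> * B * (P L x j * (v j - v x)))"
      using pt by (intro sum_mono) auto
    also have "\<dots> = lunder \<pi> * B * ((\<Sum>j\<in>{1..m}. P L x j * v j) - v x)"
      using P_sum[OF x, of L] by (simp add: sum_distrib_left[symmetric] algebra_simps sum_subtractf sum_distrib_right[symmetric])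
    also have "\<dots> \<le> 0" using vex[OF x na] lu B0 by (intro mult_nonneg_nonpos) auto
    finally have "(\<Sum>j\<in>{1..m}. P H x j * (W j - W x)) \<le> 0" .
    moreover have "(\<Sum>j\<in>{1..m}. P H x j * (W j - W x)) = (\<Sum>j\<in>{1..m}. P H x j * W j) - (\<Sum>j\<in>{1..m}. P H x j) * W x"
      by (simp add: right_diff_distrib sum_subtractf sum_distrib_right)
    then have "(\<Sum>j\<in>{1..m}. P H x j * (W j - W x)) = (\<Sum>j\<in>{1..m}. P H x j * W j) - W x"
      using P_sum[OF x, of H] by simp
    ultimately show ?thesis by simp
  qed
  have props: "v x \<le> W x \<and> W x \<le> 1
              \<and> W x * (1 - v x) \<le> gamma \<pi> ^ (K - 2) * v x * (1 - W x)
              \<and> (W x = v x \<or> (4 \<le> K \<longrightarrow> W x * (1 - v x) < gamma \<pi> ^ (K - 2) * v x * (1 - W x)))"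
    if x: "x \<in> {1..m}" for x
  proof -
    define i where "i = idx x"
    have i: "i < K" "w i = v x" using idx[OF x] unfolding i_def by auto
    have A: "v x \<le> W x" "W x \<le> 1" using gs.Gs_ge_w[OF i(1)] gs.Gs_bounds[OF i(1)] i unfolding W_def i_def by auto
    have B: "W x * (1 - v x) \<le> gamma \<pi> ^ (K - 2) * v x * (1 - W x)"
      using gs.odds[OF i(1)] i unfolding W_def i_def by simp
    have C: "W x = v x \<or> (4 \<le> K \<longrightarrow> W x * (1 - v x) < gamma \<pi> ^ (K - 2) * v x * (1 - W x))"
    proof (cases "i = 0 \<or> i = K - 1")
      case True then have "W x = v x" using gs.Gs0 gs.Gs_top i unfolding W_def i_def by auto
      then show ?thesis by simp
    next
      case False
      then have i01: "0 < i" "i < K - 1" using i by auto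
      have "4 \<le> K \<longrightarrow> W x * (1 - v x) < gamma \<pi> ^ (K - 2) * v x * (1 - W x)"
      proof
        assume "4 \<le> K"
        from gs.odds_strict[OF this i01] show "W x * (1 - v x) < gamma \<pi> ^ (K - 2) * v x * (1 - W x)"
          using i unfolding W_def i_def by simp
      qed
      then show ?thesis by simp
    qed
    show ?thesis using A B C by blast
  qed
  show ?thesis using props exc unfolding K_def V_def by blast
qed


lemma endval_cong:
  assumes "\<And>x. \<sigma>1 x th = \<sigma>2 x th"
  shows "endval m \<pi> f \<sigma>1 u th n x = endval m \<pi> f \<sigma>2 u th n x"
  using assms by (induction n arbitrary: x) auto

lemma lv_cong:
  assumes "\<And>x. \<sigma>1 x th = \<sigma>2 x th"
  shows "lv \<sigma>1 u th x = lv \<sigma>2 u th x"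
  unfolding lv_def using endval_cong[of \<sigma>1 th \<sigma>2, OF assms] by simp

lemma endval_add:
  "endval m \<pi> f \<sigma> (\<lambda>x. u1 x + u2 x) th n x = endval m \<pi> f \<sigma> u1 th n x + endval m \<pi> f \<sigma> u2 th n x"
proof (induction n arbitrary: x)
  case 0 then show ?case by simp
next
  case (Suc n)
  have "(\<Sum>j\<in>{1..m}. P th x j * endval m \<pi> f \<sigma> (\<lambda>x. u1 x + u2 x) th n j)
      = (\<Sum>j\<in>{1..m}. P th x j * endval m \<pi> f \<sigma> u1 th n j) + (\<Sum>j\<in>{1..m}. P th x j * endval m \<pi> f \<sigma> u2 th n j)"
    by (simp add: Suc.IH distrib_left sum.distrib)
  then show ?case by (simp add: algebra_simps)
qed

lemma lv_add:
  assumes \<sigma>: "valid_strategy m \<sigma>"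
    and u1: "\<And>x. x \<in> {1..m} \<Longrightarrow> 0 \<le> u1 x \<and> u1 x \<le> 1"
    and u2: "\<And>x. x \<in> {1..m} \<Longrightarrow> 0 \<le> u2 x \<and> u2 x \<le> 1"
    and u3: "\<And>x. x \<in> {1..m} \<Longrightarrow> 0 \<le> u1 x + u2 x \<and> u1 x + u2 x \<le> 1"
    and x: "x \<in> {1..m}"
  shows "lv \<sigma> (\<lambda>x. u1 x + u2 x) th x = lv \<sigma> u1 th x + lv \<sigma> u2 th x"
proof -
  have l1: "(\<lambda>n. endval m \<pi> f \<sigma> u1 th n x) \<longlonglongrightarrow> lv \<sigma> u1 th x"
    using endval_lim[of \<sigma> u1 x th] \<sigma> u1 x by blast
  have l2: "(\<lambda>n. endval m \<pi> f \<sigma> u2 th n x) \<longlonglongrightarrow> lv \<sigma> u2 th x"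
    using endval_lim[of \<sigma> u2 x th] \<sigma> u2 x by blast
  have l3: "(\<lambda>n. endval m \<pi> f \<sigma> (\<lambda>x. u1 x + u2 x) th n x) \<longlonglongrightarrow> lv \<sigma> (\<lambda>x. u1 x + u2 x) th x"
    using endval_lim[of \<sigma> "\<lambda>x. u1 x + u2 x" x th] \<sigma> u3 x by blast
  have "(\<lambda>n. endval m \<pi> f \<sigma> (\<lambda>x. u1 x + u2 x) th n x) \<longlonglongrightarrow> lv \<sigma> u1 th x + lv \<sigma> u2 th x"
    unfolding endval_add by (rule tendsto_add[OF l1 l2])
  then show ?thesis using l3 by (rule LIMSEQ_unique[rotated])
qed

lemma payoff_lv: "payoff_theta m \<pi> f g \<sigma> u th = (\<Sum>x\<in>{1..m}. g x * lv \<sigma> u th x)"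
  unfolding payoff_theta_def lv_def ..

lemma upper:
  assumes p: "0 < p" "p < 1" and gam: "1 < gamma \<pi>" and lu: "0 < lunder \<pi>" and m2: "2 \<le> m"
    and vp: "valid_protocol m f g a" and sb: "\<sigma> \<in> br m \<pi> p f g a"
  shows "UR m \<pi> p f g a \<sigma> \<le> Bfun p (gamma \<pi> ^ (m - 2))"
    and "4 \<le> m \<Longrightarrow> kappa p < gamma \<pi> ^ (m - 2) \<Longrightarrow> UR m \<pi> p f g a \<sigma> < Bfun p (gamma \<pi> ^ (m - 2))"
proof -
  have a01: "\<And>x. x \<in> {1..m} \<Longrightarrow> 0 \<le> a x \<and> a x \<le> 1" using vp unfolding valid_protocol_def by auto
  have g0: "\<And>x. x \<in> {1..m} \<Longrightarrow> 0 \<le> g x" and g1: "(\<Sum>x\<in>{1..m}. g x) = 1"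
    using vp unfolding valid_protocol_def by auto
  have \<sigma>: "valid_strategy m \<sigma>" and opt: "\<And>\<sigma>'. valid_strategy m \<sigma>' \<Longrightarrow> US m \<pi> p f g a \<sigma>' \<le> US m \<pi> p f g a \<sigma>"
    using sb unfolding br_def by auto
  define v where "v = vs a L"
  have v01: "\<And>x. x \<in> {1..m} \<Longrightarrow> 0 \<le> v x \<and> v x \<le> 1" unfolding v_def using vs_bounds[where a=a and th=L, OF a01] by blast
  have vex: "\<And>x. x \<in> {1..m} \<Longrightarrow> \<not> absorbing f x \<Longrightarrow> (\<Sum>j\<in>{1..m}. P L x j * v j) \<le> v x"
    unfolding v_def using vs_excessive[where a=a and th=L, OF a01] by blast
  have va: "\<And>x. x \<in> {1..m} \<Longrightarrow> a x \<le> v x" unfolding v_def using vs_ge_a[where a=a and th=L, OF a01] by blast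
  define \<sigma>' where "\<sigma>' x t = (if t = L then sstar a L x t else \<sigma> x t)" for x t
  have \<sigma>'v: "valid_strategy m \<sigma>'" using \<sigma> sstar_valid[where a=a and th=L, OF a01] unfolding valid_strategy_def \<sigma>'_def by auto
  have PayL': "payoff_theta m \<pi> f g \<sigma>' a L = (\<Sum>x\<in>{1..m}. g x * v x)"
  proof -
    have "lv \<sigma>' a L x = v x" if "x \<in> {1..m}" for x
    proof -
      have "lv \<sigma>' a L x = lv (sstar a L) a L x" by (rule lv_cong) (simp add: \<sigma>'_def)
      also have "\<dots> = v x" unfolding v_def using sstar_attains[where a=a and th=L, OF a01 that] .
      finally show ?thesis .
    qed
    then show ?thesis unfolding payoff_lv by simp
  qed
  have PayH': "payoff_theta m \<pi> f g \<sigma>' a H = payoff_theta m \<pi> f g \<sigma> a H"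
    unfolding payoff_lv using lv_cong[of \<sigma>' H \<sigma>] by (simp add: \<sigma>'_def)
  have "US m \<pi> p f g a \<sigma>' \<le> US m \<pi> p f g a \<sigma>" using opt[OF \<sigma>'v] .
  then have "(1 - p) * (\<Sum>x\<in>{1..m}. g x * v x) \<le> (1 - p) * payoff_theta m \<pi> f g \<sigma> a L"
    unfolding US_def PayL' PayH' by simp
  then have PL: "(\<Sum>x\<in>{1..m}. g x * v x) \<le> (\<Sum>x\<in>{1..m}. g x * lv \<sigma> a L x)"
    using p unfolding payoff_lv by (simp add: mult_le_cancel_left)
  have m1: "1 \<le> m" using m2 by simp
  obtain W where W0: "\<forall>x\<in>{1..m}. v x \<le> W x \<and> W x \<le> 1
              \<and> W x * (1 - v x) \<le> gamma \<pi> ^ (card (v ` {1..m}) - 2) * v x * (1 - W x)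
              \<and> (W x = v x \<or> (4 \<le> card (v ` {1..m}) \<longrightarrow> W x * (1 - v x) < gamma \<pi> ^ (card (v ` {1..m}) - 2) * v x * (1 - W x)))"
    and Wex0: "\<forall>x\<in>{1..m}. \<not> absorbing f x \<longrightarrow> (\<Sum>j\<in>{1..m}. P H x j * W j) \<le> W x"
    using transfer[of v, OF gam lu v01 vex m1] by blast
  have W: "\<And>x. x \<in> {1..m} \<Longrightarrow> v x \<le> W x \<and> W x \<le> 1
              \<and> W x * (1 - v x) \<le> gamma \<pi> ^ (card (v ` {1..m}) - 2) * v x * (1 - W x)
              \<and> (W x = v x \<or> (4 \<le> card (v ` {1..m}) \<longrightarrow> W x * (1 - v x) < gamma \<pi> ^ (card (v ` {1..m}) - 2) * v x * (1 - W x)))"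
    using W0 by blast
  have Wex: "\<And>x. x \<in> {1..m} \<Longrightarrow> \<not> absorbing f x \<Longrightarrow> (\<Sum>j\<in>{1..m}. P H x j * W j) \<le> W x"
    using Wex0 by blast
  define K where "K = card (v ` {1..m})"
  have Km: "K \<le> m" unfolding K_def using card_image_le[of "{1..m}" v] by simp
  define c where "c = gamma \<pi> ^ (m - 2)"
  have c1: "1 \<le> c" unfolding c_def using gam by (intro one_le_power) auto
  have cK: "gamma \<pi> ^ (K - 2) \<le> c" unfolding c_def using gam Km by (intro power_increasing) auto
  have LH: "lv \<sigma> a H x \<le> W x" if x: "x \<in> {1..m}" for x
  proof (rule lv_majorant[of \<sigma> a, OF \<sigma> a01])
    show "\<And>x. x \<in> {1..m} \<Longrightarrow> 0 \<le> W x" using W v01 by force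
    show "\<And>x. x \<in> {1..m} \<Longrightarrow> a x \<le> W x" using W va by force
    show "\<And>x. x \<in> {1..m} \<Longrightarrow> \<not> absorbing f x \<Longrightarrow> (\<Sum>j\<in>{1..m}. P H x j * W j) \<le> W x" using Wex .
  qed (use x in auto)
  have LL: "lv \<sigma> (\<lambda>x. 1 - a x) L x \<le> 1 - lv \<sigma> a L x" if x: "x \<in> {1..m}" for x
  proof -
    have "lv \<sigma> (\<lambda>x. (1 - a x) + a x) L x = lv \<sigma> (\<lambda>x. 1 - a x) L x + lv \<sigma> a L x"
      by (rule lv_add[of \<sigma> "\<lambda>x. 1 - a x" a x L, OF \<sigma> _ a01 _ x]) (use a01 in auto)
    moreover have "lv \<sigma> (\<lambda>x. (1 - a x) + a x) L x \<le> 1"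
      using lv_bounds[of \<sigma> "\<lambda>x. 1" x L] \<sigma> x by simp
    ultimately show ?thesis by simp
  qed
  have URle: "UR m \<pi> p f g a \<sigma> \<le> (\<Sum>x\<in>{1..m}. g x * (p * W x + (1 - p) * (1 - v x)))"
  proof -
    have "UR m \<pi> p f g a \<sigma> = p * (\<Sum>x\<in>{1..m}. g x * lv \<sigma> a H x) + (1 - p) * (\<Sum>x\<in>{1..m}. g x * lv \<sigma> (\<lambda>x. 1 - a x) L x)"
      unfolding UR_def payoff_lv ..
    also have "\<dots> \<le> p * (\<Sum>x\<in>{1..m}. g x * W x) + (1 - p) * (\<Sum>x\<in>{1..m}. g x * (1 - lv \<sigma> a L x))"
      using p g0 LH LL by (intro add_mono mult_left_mono sum_mono) auto
    also have "(\<Sum>x\<in>{1..m}. g x * (1 - lv \<sigma> a L x)) = 1 - (\<Sum>x\<in>{1..m}. g x * lv \<sigma> a L x)"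
      using g1 by (simp add: right_diff_distrib sum_subtractf)
    also have "\<dots> \<le> 1 - (\<Sum>x\<in>{1..m}. g x * v x)" using PL by simp
    also have "1 - (\<Sum>x\<in>{1..m}. g x * v x) = (\<Sum>x\<in>{1..m}. g x * (1 - v x))"
      using g1 by (simp add: right_diff_distrib sum_subtractf)
    finally show ?thesis using p
      by (simp add: sum_distrib_left distrib_left sum.distrib mult.left_commute)
  qed
  have odds: "W x * (1 - v x) \<le> c * v x * (1 - W x)" if x: "x \<in> {1..m}" for x
  proof -
    have "0 \<le> v x * (1 - W x)" using W[OF x] v01[OF x] by auto
    then have "gamma \<pi> ^ (K - 2) * (v x * (1 - W x)) \<le> c * (v x * (1 - W x))" using cK by (intro mult_right_mono) auto
    then show ?thesis using W[OF x] unfolding K_def by (simp add: mult.assoc)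
  qed
  have pt: "p * W x + (1 - p) * (1 - v x) \<le> Bfun p c" if x: "x \<in> {1..m}" for x
    using bound_main(1)[OF p c1 _ _ _ _ odds[OF x]] v01[OF x] W[OF x] by auto
  have "(\<Sum>x\<in>{1..m}. g x * (p * W x + (1 - p) * (1 - v x))) \<le> (\<Sum>x\<in>{1..m}. g x * Bfun p c)"
    using pt g0 by (intro sum_mono mult_left_mono) auto
  also have "\<dots> = Bfun p c" using g1 by (simp add: sum_distrib_right[symmetric])
  finally show "UR m \<pi> p f g a \<sigma> \<le> Bfun p (gamma \<pi> ^ (m - 2))" using URle unfolding c_def by simp
  assume m4: "4 \<le> m" and ck: "kappa p < gamma \<pi> ^ (m - 2)"
  have ck': "kappa p < c" using ck unfolding c_def .
  have c1': "1 < c" unfolding c_def using gam m4 by (intro one_less_power) auto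
  have ptS: "p * W x + (1 - p) * (1 - v x) < Bfun p c" if x: "x \<in> {1..m}" for x
  proof -
    have Wx: "v x \<le> W x" "W x \<le> 1" using W[OF x] by auto
    have vx: "0 \<le> v x" "v x \<le> 1" using v01[OF x] by auto
    have "W x * (1 - v x) < c * v x * (1 - W x) \<or> v x = 0 \<or> v x = 1"
    proof (cases "0 < v x * (1 - W x)")
      case False
      have "v x = 0 \<or> W x = 1"
      proof (rule ccontr)
        assume "\<not> (v x = 0 \<or> W x = 1)"
        then have "0 < v x" "0 < 1 - W x" using Wx vx by auto
        then have "0 < v x * (1 - W x)" by simp
        with False show False by simp
      qed
      then show ?thesis
      proof
        assume "W x = 1"
        then have "1 - v x \<le> 0" using odds[OF x] by simp
        then show ?thesis using vx by auto
      qed simp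
    next
      case True
      show ?thesis
      proof (cases "K < m")
        case True
        have "gamma \<pi> ^ (K - 2) < c" unfolding c_def using gam True m4 by (intro power_strict_increasing) auto
        then have "gamma \<pi> ^ (K - 2) * (v x * (1 - W x)) < c * (v x * (1 - W x))"
          using \<open>0 < v x * (1 - W x)\<close> by (intro mult_strict_right_mono) auto
        then show ?thesis using W[OF x] unfolding K_def by (simp add: mult.assoc)
      next
        case False
        then have Kmq: "K = m" using Km by simp
        have "W x = v x \<or> W x * (1 - v x) < gamma \<pi> ^ (m - 2) * v x * (1 - W x)"
          using W[OF x] m4 Kmq unfolding K_def by auto
        then show ?thesis
        proof
          assume e: "W x = v x"
          have "1 * (v x * (1 - W x)) < c * (v x * (1 - W x))" using c1' True by (intro mult_strict_right_mono) auto
          then have "W x * (1 - v x) < c * v x * (1 - W x)" using e by (simp add: mult.assoc)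
          then show ?thesis by simp
        qed (simp add: c_def)
      qed
    qed
    then show ?thesis using bound_main(2)[OF p c1 vx Wx(1)[THEN order_trans[OF vx(1)]] Wx(2) odds[OF x] ck'] by blast
  qed
  obtain x0 where x0: "x0 \<in> {1..m}" "0 < g x0"
  proof -
    have "\<exists>x\<in>{1..m}. 0 < g x"
    proof (rule ccontr)
      assume "\<not> (\<exists>x\<in>{1..m}. 0 < g x)"
      then have "\<forall>x\<in>{1..m}. g x = 0" using g0 by force
      then show False using g1 by simp
    qed
    then show ?thesis using that by blast
  qed
  have "(\<Sum>x\<in>{1..m}. g x * (p * W x + (1 - p) * (1 - v x))) < (\<Sum>x\<in>{1..m}. g x * Bfun p c)"
  proof (rule sum_strict_mono_ex1)
    show "\<forall>x\<in>{1..m}. g x * (p * W x + (1 - p) * (1 - v x)) \<le> g x * Bfun p c"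
      using pt g0 by (auto intro: mult_left_mono)
    show "\<exists>x\<in>{1..m}. g x * (p * W x + (1 - p) * (1 - v x)) < g x * Bfun p c"
      using x0 ptS[OF x0(1)] by (intro bexI[of _ x0] mult_strict_left_mono) auto
  qed simp
  also have "\<dots> = Bfun p c" using g1 by (simp add: sum_distrib_right[symmetric])
  finally show "UR m \<pi> p f g a \<sigma> < Bfun p (gamma \<pi> ^ (m - 2))" using URle unfolding c_def by simp
qed

end


definition ind :: "bool \<Rightarrow> real" where "ind b = (if b then 1 else 0)"

lemma sum_ind: "finite S \<Longrightarrow> (\<Sum>j\<in>S. ind (j = a) * h j) = (if a \<in> S then h a else 0)"
proof -
  assume S: "finite S"
  have "(\<Sum>j\<in>S. ind (j = a) * h j) = (\<Sum>j\<in>S. if j = a then h j else 0)"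
    by (intro sum.cong) (auto simp: ind_def)
  also have "\<dots> = (if a \<in> S then h a else 0)" by (rule sum.delta[OF S])
  finally show ?thesis .
qed

context proto begin
lemma lv_stop:
  assumes \<sigma>: "valid_strategy m \<sigma>" and u: "\<And>x. x \<in> {1..m} \<Longrightarrow> 0 \<le> u x \<and> u x \<le> 1"
    and x: "x \<in> {1..m}" and na: "\<not> absorbing f x" and s1: "\<sigma> x th = 1"
  shows "lv \<sigma> u th x = u x"
proof -
  have "endval m \<pi> f \<sigma> u th (Suc n) x = u x" for n using na s1 by simp
  then have "(\<lambda>n. endval m \<pi> f \<sigma> u th (Suc n) x) \<longlonglongrightarrow> u x" by simp
  moreover have "(\<lambda>n. endval m \<pi> f \<sigma> u th (Suc n) x) \<longlonglongrightarrow> lv \<sigma> u th x"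
    using endval_lim[of \<sigma> u x th] \<sigma> u x by (intro LIMSEQ_Suc) blast
  ultimately show ?thesis by (rule LIMSEQ_unique[rotated])
qed
end

locale chain =
  fixes \<pi> :: "theta \<Rightarrow> 's::finite \<Rightarrow> real" and m :: nat and sh sl :: 's and Q :: "nat \<Rightarrow> real"
  assumes pi_pos: "\<And>th s. 0 < \<pi> th s"
    and pi_sum: "\<And>th. (\<Sum>s\<in>UNIV. \<pi> th s) = 1"
    and shsl: "sh \<noteq> sl" and m3: "3 \<le> m"
    and Qpos: "\<And>j. 0 < Q j"
    and gam_eq: "gamma \<pi> = (\<pi> H sh / \<pi> L sh) / (\<pi> H sl / \<pi> L sl)"
    and gam1: "1 < gamma \<pi>"
begin

definition tt :: "nat \<Rightarrow> real" where "tt k = (\<pi> H sh / \<pi> H sl) * (Q k / Q (k - 1))"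
definition al :: "nat \<Rightarrow> real" where "al k = 1 / (1 + tt k)"
definition be :: "nat \<Rightarrow> real" where "be k = tt k / (1 + tt k)"
definition Af :: "nat \<Rightarrow> 's \<Rightarrow> real" where "Af k s = (if s = sh then al k else 0)"
definition Bf :: "nat \<Rightarrow> 's \<Rightarrow> real" where "Bf k s = (if s = sl then be k else 0)"
definition interior :: "nat \<Rightarrow> bool" where "interior k \<longleftrightarrow> 2 \<le> k \<and> k \<le> m - 1"
definition fc :: "nat \<Rightarrow> 's \<Rightarrow> nat \<Rightarrow> real" where
  "fc k s j = (if interior k then Af k s * ind (j = k + 1) + Bf k s * ind (j = k - 1) + (1 - Af k s - Bf k s) * ind (j = k)
               else ind (j = k))"

lemma tt_pos: "0 < tt k" unfolding tt_def using pi_pos Qpos by (intro mult_pos_pos divide_pos_pos) auto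
lemma al_pos: "0 < al k" "al k \<le> 1" unfolding al_def using tt_pos[of k] by auto
lemma be_pos: "0 < be k" "be k \<le> 1" unfolding be_def using tt_pos[of k] by auto
lemma albe: "al k + be k = 1" unfolding al_def be_def using tt_pos[of k] by (simp add: field_simps)
lemma be_al: "be k = tt k * al k" unfolding al_def be_def by simp

lemma AB: "0 \<le> Af k s" "0 \<le> Bf k s" "Af k s + Bf k s \<le> 1"
  unfolding Af_def Bf_def using al_pos[of k] be_pos[of k] shsl by auto

lemma fc_nonneg: "0 \<le> fc k s j"
  unfolding fc_def ind_def using AB[of k s] by auto

lemma fc_sum: "k \<in> {1..m} \<Longrightarrow> (\<Sum>j\<in>{1..m}. fc k s j) = 1"
proof -
  assume k: "k \<in> {1..m}"
  show ?thesis
  proof (cases "interior k")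
    case True
    then have r: "k + 1 \<in> {1..m}" "k - 1 \<in> {1..m}" "k \<in> {1..m}" unfolding interior_def using m3 by auto
    have "(\<Sum>j\<in>{1..m}. fc k s j) = (\<Sum>j\<in>{1..m}. Af k s * ind (j = k + 1)) + (\<Sum>j\<in>{1..m}. Bf k s * ind (j = k - 1))
          + (\<Sum>j\<in>{1..m}. (1 - Af k s - Bf k s) * ind (j = k))"
      unfolding fc_def using True by (simp add: sum.distrib)
    also have "\<dots> = 1" using sum_ind[of "{1..m}" "k + 1" "\<lambda>_. Af k s"] sum_ind[of "{1..m}" "k - 1" "\<lambda>_. Bf k s"]
        sum_ind[of "{1..m}" k "\<lambda>_. 1 - Af k s - Bf k s"] r by (simp add: mult.commute)
    finally show ?thesis .
  next
    case False
    then show ?thesis unfolding fc_def using sum_ind[of "{1..m}" k "\<lambda>_. 1"] k by simp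
  qed
qed

sublocale proto m \<pi> fc
  by unfold_locales (rule pi_pos, rule pi_sum, rule fc_nonneg, erule fc_sum)

lemma sum_pi_A: "(\<Sum>s\<in>UNIV. \<pi> th s * Af k s) = \<pi> th sh * al k"
  unfolding Af_def by (simp add: if_distrib cong: if_cong)
lemma sum_pi_B: "(\<Sum>s\<in>UNIV. \<pi> th s * Bf k s) = \<pi> th sl * be k"
  unfolding Bf_def by (simp add: if_distrib cong: if_cong)

lemma P_int: assumes "interior k"
  shows "P th k j = \<pi> th sh * al k * ind (j = k + 1) + \<pi> th sl * be k * ind (j = k - 1)
                    + (1 - \<pi> th sh * al k - \<pi> th sl * be k) * ind (j = k)"
proof -
  have e: "\<pi> th s * fc k s j = ind (j = k + 1) * (\<pi> th s * Af k s) + ind (j = k - 1) * (\<pi> th s * Bf k s)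
       + ind (j = k) * \<pi> th s - ind (j = k) * (\<pi> th s * Af k s) - ind (j = k) * (\<pi> th s * Bf k s)" for s
    unfolding fc_def using assms by (simp add: algebra_simps)
  have "P th k j = (\<Sum>s\<in>UNIV. ind (j = k + 1) * (\<pi> th s * Af k s) + ind (j = k - 1) * (\<pi> th s * Bf k s)
       + ind (j = k) * \<pi> th s - ind (j = k) * (\<pi> th s * Af k s) - ind (j = k) * (\<pi> th s * Bf k s))"
    unfolding PP_def using e by simp
  also have "\<dots> = ind (j = k + 1) * (\<Sum>s\<in>UNIV. \<pi> th s * Af k s) + ind (j = k - 1) * (\<Sum>s\<in>UNIV. \<pi> th s * Bf k s)
       + ind (j = k) * (\<Sum>s\<in>UNIV. \<pi> th s) - ind (j = k) * (\<Sum>s\<in>UNIV. \<pi> th s * Af k s) - ind (j = k) * (\<Sum>s\<in>UNIV. \<pi> th s * Bf k s)"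
    by (simp only: sum.distrib sum_subtractf sum_distrib_left)
  finally show ?thesis unfolding sum_pi_A sum_pi_B pi_sum by (simp add: algebra_simps)
qed

lemma P_noint: assumes "\<not> interior k" shows "P th k j = ind (j = k)"
  unfolding PP_def fc_def using assms pi_sum by (simp add: sum_distrib_right[symmetric])

lemma absorbing_iff: "absorbing fc k \<longleftrightarrow> \<not> interior k"
proof
  assume a: "absorbing fc k"
  show "\<not> interior k"
  proof
    assume i: "interior k"
    have "fc k sh k = 1" using a unfolding absorbing_def by auto
    then have "1 - al k = 1" unfolding fc_def ind_def Af_def Bf_def using i shsl by auto
    then show False using al_pos[of k] by simp
  qed
next
  assume "\<not> interior k" then show "absorbing fc k" unfolding absorbing_def fc_def ind_def by simp
qed


definition QQ :: "theta \<Rightarrow> nat \<Rightarrow> real" where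
  "QQ th j = (if th = H then 1 else gamma \<pi> ^ (j - 1)) * Q j"
definition ZZ :: "theta \<Rightarrow> real" where "ZZ th = (\<Sum>j\<in>{1..<m}. QQ th j)"
definition hh :: "theta \<Rightarrow> nat \<Rightarrow> real" where "hh th k = (\<Sum>j\<in>{1..<k}. QQ th j) / ZZ th"

lemma gam_pos: "0 < gamma \<pi>" unfolding gam_eq using pi_pos by (intro divide_pos_pos) auto

lemma QQ_pos: "0 < QQ th j" unfolding QQ_def using Qpos gam_pos by (cases th) auto

lemma ZZ_pos: "0 < ZZ th" unfolding ZZ_def using QQ_pos m3 by (intro sum_pos) auto

lemma kid: assumes k: "2 \<le> k" shows "\<pi> th sh * QQ th k = \<pi> th sl * tt k * QQ th (k - 1)"
proof (cases th)
  case H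
  have "Q (k - 1) \<noteq> 0" "\<pi> H sl \<noteq> 0" using Qpos[of "k - 1"] pi_pos[of H sl] by auto
  then show ?thesis unfolding QQ_def tt_def H by (simp add: field_simps)
next
  case L
  have e: "gamma \<pi> ^ (k - 1) = gamma \<pi> * gamma \<pi> ^ (k - 1 - 1)"
  proof -
    have "k - 1 = Suc (k - 1 - 1)" using k by simp
    then show ?thesis by (metis power_Suc)
  qed
  have nz: "Q (k - 1) \<noteq> 0" "\<pi> H sl \<noteq> 0" "\<pi> L sl \<noteq> 0" "\<pi> L sh \<noteq> 0" "\<pi> H sh \<noteq> 0"
    using Qpos[of "k - 1"] pi_pos[of H sl] pi_pos[of L sl] pi_pos[of L sh] pi_pos[of H sh] by auto
  have "\<pi> L sh * gamma \<pi> = \<pi> L sl * (\<pi> H sh / \<pi> H sl)"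
    unfolding gam_eq using nz by (simp add: field_simps)
  then show ?thesis unfolding QQ_def tt_def L e using nz by (simp add: field_simps)
qed

lemma hh_step: "1 \<le> k \<Longrightarrow> hh th (Suc k) - hh th k = QQ th k / ZZ th"
  unfolding hh_def by (simp add: diff_divide_distrib[symmetric])

lemma harmonic: assumes k: "interior k"
  shows "(\<Sum>j\<in>{1..m}. P th k j * hh th j) = hh th k"
proof -
  have r: "k + 1 \<in> {1..m}" "k - 1 \<in> {1..m}" "k \<in> {1..m}" using k m3 unfolding interior_def by auto
  define a1 where "a1 = \<pi> th sh * al k"
  define b1 where "b1 = \<pi> th sl * be k"
  have pj: "P th k j * hh th j = ind (j = k + 1) * (a1 * hh th j) + ind (j = k - 1) * (b1 * hh th j)
          + ind (j = k) * ((1 - a1 - b1) * hh th j)" for j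
    unfolding P_int[OF k] a1_def b1_def by (simp add: algebra_simps)
  have "(\<Sum>j\<in>{1..m}. P th k j * hh th j) = (\<Sum>j\<in>{1..m}. ind (j = k + 1) * (a1 * hh th j))
     + (\<Sum>j\<in>{1..m}. ind (j = k - 1) * (b1 * hh th j)) + (\<Sum>j\<in>{1..m}. ind (j = k) * ((1 - a1 - b1) * hh th j))"
    by (simp only: pj sum.distrib)
  also have "\<dots> = a1 * hh th (k + 1) + b1 * hh th (k - 1) + (1 - a1 - b1) * hh th k"
    using r by (simp add: sum_ind)
  also have "\<dots> = hh th k + (a1 * (hh th (Suc k) - hh th k) - b1 * (hh th k - hh th (k - 1)))"
    by (simp add: algebra_simps)
  also have "a1 * (hh th (Suc k) - hh th k) - b1 * (hh th k - hh th (k - 1)) = 0"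
  proof -
    have k2: "2 \<le> k" using k unfolding interior_def by simp
    have s1: "hh th (Suc k) - hh th k = QQ th k / ZZ th" using k2 by (intro hh_step) simp
    have s2: "hh th k - hh th (k - 1) = QQ th (k - 1) / ZZ th"
    proof -
      have "k = Suc (k - 1)" using k2 by simp
      then have "hh th k - hh th (k - 1) = hh th (Suc (k - 1)) - hh th (k - 1)" by simp
      also have "\<dots> = QQ th (k - 1) / ZZ th" using k2 by (intro hh_step) simp
      finally show ?thesis .
    qed
    have "a1 * QQ th k = b1 * QQ th (k - 1)"
      unfolding a1_def b1_def be_al using kid[OF k2, of th] by (simp add: algebra_simps)
    then show ?thesis unfolding s1 s2 by (simp add: diff_divide_distrib[symmetric] mult.commute)
  qed
  finally show ?thesis by simp
qed

lemma hh1: "hh th 1 = 0" unfolding hh_def by simp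
lemma hhm: "hh th m = 1" unfolding hh_def ZZ_def using ZZ_pos[of th] unfolding ZZ_def by simp
lemma hh_bounds: "k \<le> m \<Longrightarrow> 0 \<le> hh th k \<and> hh th k \<le> 1"
proof -
  assume k: "k \<le> m"
  have a: "0 \<le> (\<Sum>j\<in>{1..<k}. QQ th j)" using QQ_pos by (intro sum_nonneg) (auto intro: less_imp_le)
  have b: "(\<Sum>j\<in>{1..<k}. QQ th j) \<le> ZZ th" unfolding ZZ_def using k QQ_pos
    by (intro sum_mono2) (auto intro: less_imp_le)
  show ?thesis unfolding hh_def using a b ZZ_pos[of th] by auto
qed

lemma hh2: "hh th 2 = Q 1 / ZZ th"
proof -
  have e: "{1..<2::nat} = {1}" by auto
  show ?thesis unfolding hh_def e QQ_def by simp
qed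

lemma ZZ_le: "ZZ H \<le> ZZ L"
  unfolding ZZ_def QQ_def using Qpos gam1
  by (intro sum_mono) (auto intro!: one_le_power mult_right_mono less_imp_le[of 0])

lemma hh2_le: "hh L 2 \<le> hh H 2"
  unfolding hh2 using ZZ_le ZZ_pos Qpos[of 1] by (intro divide_left_mono) (auto intro: less_imp_le mult_pos_pos)

lemma no_closed: assumes Z: "Z \<subseteq> {k. interior k}" "Z \<noteq> {}" shows "\<not> closedP th Z"
proof
  assume cl: "closedP th Z"
  have fin: "finite Z" by (rule finite_subset[of _ "{..m}"]) (use Z(1) in \<open>auto simp: interior_def\<close>)
  define k where "k = Min Z"
  have kZ: "k \<in> Z" unfolding k_def using fin Z(2) by simp
  have kmin: "\<And>j. j \<in> Z \<Longrightarrow> k \<le> j" unfolding k_def using fin by simp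
  have ki: "interior k" using kZ Z(1) by auto
  have km: "k \<in> {1..m}" "k - 1 \<in> {1..m}" using ki m3 unfolding interior_def by auto
  have "P th k (k - 1) = \<pi> th sl * be k" unfolding P_int[OF ki] ind_def using ki unfolding interior_def by auto
  then have "0 < P th k (k - 1)" using pi_pos be_pos by simp
  then have "k - 1 \<in> Z" using cl kZ km unfolding closedP_def by blast
  then have "k \<le> k - 1" using kmin by blast
  then show False using ki unfolding interior_def by arith
qed


definition ac :: "nat \<Rightarrow> real" where "ac k = (if k = m then 1 else if k = 2 then hh L 2 else 0)"
definition gc :: "nat \<Rightarrow> real" where "gc k = ind (k = 2)"
definition sc :: "nat \<Rightarrow> theta \<Rightarrow> real" where "sc k th = (if th = L \<and> k = 2 then 1 else 0)"

lemma two_in: "2 \<in> {1..m}" using m3 by auto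
lemma two_int: "interior 2" unfolding interior_def using m3 by auto

lemma ac01: "x \<in> {1..m} \<Longrightarrow> 0 \<le> ac x \<and> ac x \<le> 1"
  unfolding ac_def using hh_bounds[of 2 L] m3 by auto

lemma fc_sum2: "Suc 0 \<le> i \<Longrightarrow> i \<le> m \<Longrightarrow> sum (fc i s) {Suc 0..m} = 1"
  using fc_sum[of i s] by simp

lemma vp: "valid_protocol m fc gc ac"
  unfolding valid_protocol_def
proof (intro conjI ballI allI)
  show "(\<Sum>i\<in>{1..m}. gc i) = 1" unfolding gc_def using sum_ind[of "{1..m}" 2 "\<lambda>_. 1"] two_in by simp
qed (auto simp: fc_nonneg fc_sum2 ac01 gc_def ind_def)

lemma sc_valid: "valid_strategy m sc" unfolding valid_strategy_def sc_def by auto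

lemma ac_le: "x \<in> {1..m} \<Longrightarrow> ac x \<le> hh th x"
proof -
  assume x: "x \<in> {1..m}"
  show ?thesis
  proof (cases "x = m")
    case True then show ?thesis unfolding ac_def using hhm by simp
  next
    case False
    show ?thesis
    proof (cases "x = 2")
      case True then show ?thesis unfolding ac_def using False hh2_le by (cases th) auto
    next
      case False2: False
      then show ?thesis unfolding ac_def using False hh_bounds[of x th] x by auto
    qed
  qed
qed

lemma pay_lv: "payoff_theta m \<pi> fc gc \<sigma> u th = lv \<sigma> u th 2"
  unfolding payoff_lv gc_def using sum_ind[of "{1..m}" 2 "\<lambda>x. lv \<sigma> u th x"] two_in by simp

lemma harm_ex: "x \<in> {1..m} \<Longrightarrow> \<not> absorbing fc x \<Longrightarrow> (\<Sum>j\<in>{1..m}. P th x j * hh th j) \<le> hh th x"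
  using harmonic absorbing_iff by simp

lemma pay_le: "valid_strategy m \<sigma> \<Longrightarrow> payoff_theta m \<pi> fc gc \<sigma> ac th \<le> hh th 2"
  unfolding pay_lv
  by (rule lv_majorant[of \<sigma> ac "hh th" th 2]) (use ac01 hh_bounds ac_le harm_ex two_in in auto)

lemma pay_sc: "payoff_theta m \<pi> fc gc sc ac th = hh th 2"
proof -
  define C where "C = {x\<in>{1..m}. \<not> absorbing fc x \<and> sc x th = 0}"
  have s01: "\<And>x. x \<in> {1..m} \<Longrightarrow> sc x th = 0 \<or> sc x th = 1" unfolding sc_def by auto
  have Vle: "\<And>x. x \<in> {1..m} \<Longrightarrow> lv sc ac th x \<le> hh th x"
    by (rule lv_majorant[of sc ac "hh th" th]) (use sc_valid ac01 hh_bounds ac_le harm_ex in auto)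
  have Voff: "\<And>x. x \<in> {1..m} \<Longrightarrow> x \<notin> C \<Longrightarrow> hh th x = ac x"
  proof -
    fix x assume x: "x \<in> {1..m}" and nC: "x \<notin> C"
    show "hh th x = ac x"
    proof (cases "absorbing fc x")
      case True
      then have "\<not> interior x" using absorbing_iff by simp
      then have "x = 1 \<or> x = m" using x unfolding interior_def by auto
      then show ?thesis unfolding ac_def using hh1 hhm m3 by auto
    next
      case False
      then have "sc x th = 1" using nC x s01 unfolding C_def by auto
      then have "th = L" "x = 2" unfolding sc_def by (auto split: if_splits)
      then show ?thesis unfolding ac_def using m3 by simp
    qed
  qed
  have Von: "\<And>x. x \<in> C \<Longrightarrow> hh th x = (\<Sum>j\<in>{1..m}. P th x j * hh th j)"
    using harmonic absorbing_iff unfolding C_def by auto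
  have "(\<forall>x\<in>{1..m}. lv sc ac th x = hh th x) \<or> (\<exists>Z. Z \<subseteq> C \<and> Z \<noteq> {} \<and> closedP th Z)"
    by (rule attain[of sc ac th C "hh th", OF sc_valid ac01 s01 C_def Vle Voff Von])
  moreover have "\<not> (\<exists>Z. Z \<subseteq> C \<and> Z \<noteq> {} \<and> closedP th Z)"
  proof
    assume "\<exists>Z. Z \<subseteq> C \<and> Z \<noteq> {} \<and> closedP th Z"
    then obtain Z where Z: "Z \<subseteq> C" "Z \<noteq> {}" "closedP th Z" by blast
    have "Z \<subseteq> {k. interior k}" using Z(1) absorbing_iff unfolding C_def by auto
    then show False using no_closed Z by blast
  qed
  ultimately have "lv sc ac th 2 = hh th 2" using two_in by blast
  then show ?thesis unfolding pay_lv .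
qed

lemma sc_br: "0 \<le> p \<Longrightarrow> p \<le> 1 \<Longrightarrow> sc \<in> br m \<pi> p fc gc ac"
  unfolding br_def US_def
proof (intro CollectI conjI allI impI sc_valid)
  fix \<sigma>' assume p: "0 \<le> p" "p \<le> 1" and v: "valid_strategy m \<sigma>'"
  show "p * payoff_theta m \<pi> fc gc \<sigma>' ac H + (1 - p) * payoff_theta m \<pi> fc gc \<sigma>' ac L
        \<le> p * payoff_theta m \<pi> fc gc sc ac H + (1 - p) * payoff_theta m \<pi> fc gc sc ac L"
    unfolding pay_sc using pay_le[OF v, of H] pay_le[OF v, of L] p
    by (intro add_mono mult_left_mono) auto
qed

lemma UR_sc: "UR m \<pi> p fc gc ac sc = p * hh H 2 + (1 - p) * (1 - hh L 2)"
proof -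
  have "payoff_theta m \<pi> fc gc sc (\<lambda>x. 1 - ac x) L = 1 - ac 2"
    unfolding pay_lv
    by (rule lv_stop[OF sc_valid _ two_in]) (use ac01 absorbing_iff two_int in \<open>auto simp: sc_def\<close>)
  then show ?thesis unfolding UR_def pay_sc using m3 by (simp add: ac_def)
qed

end


lemma rho_opt:
  fixes p c :: real
  assumes p: "0 < p" "p < 1" and ck: "kappa p < c"
  shows "\<exists>\<rho>>0. p / (1 + \<rho>) + (1 - p) * (1 - 1 / (1 + \<rho> * c)) = Bfun p c"
proof -
  have c1: "p / (1 - p) < c" "(1 - p) / p < c" using ck kappa_ge[OF p] by auto
  define q where "q = sqrt ((1 - p) * c / p)"
  have cpos: "0 < c" using c1 p by (smt (verit) divide_pos_pos)
  have q2: "q^2 = (1 - p) * c / p" unfolding q_def using p cpos by simp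
  have q0: "0 < q" unfolding q_def using p cpos by simp
  have q1: "1 < q"
  proof -
    have "p < (1 - p) * c" using c1(1) p by (simp add: field_simps)
    then have "1 < (1 - p) * c / p" using p by simp
    then show ?thesis unfolding q_def by (simp add: real_less_rsqrt)
  qed
  have qc: "q < c"
  proof -
    have "(1 - p) < p * c" using c1(2) p by (simp add: field_simps)
    then have a: "(1 - p) * c < p * c * c" using mult_strict_right_mono[OF _ cpos] by simp
    have "(1 - p) * c / p < c^2"
    proof -
      have "(1 - p) * c < c^2 * p" using a by (simp add: power2_eq_square algebra_simps)
      then show ?thesis using p by (simp add: divide_less_eq)
    qed
    then have "q^2 < c^2" using q2 by simp
    then show ?thesis using q0 cpos by (simp add: power_less_imp_less_base)
  qed
  define \<rho> where "\<rho> = (q - 1) / (c - q)"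
  have rpos: "0 < \<rho>" unfolding \<rho>_def using q1 qc by simp
  have cg1: "1 < c" using q1 qc by simp
  have e1: "1 + \<rho> = (c - 1) / (c - q)" unfolding \<rho>_def using qc by (simp add: field_simps)
  have e2: "1 + \<rho> * c = q * (c - 1) / (c - q)" unfolding \<rho>_def using qc by (simp add: field_simps)
  have pq: "sqrt (p * (1 - p) * c) = p * q"
  proof -
    have "(p * q)^2 = p^2 * q^2" by (simp add: power_mult_distrib)
    also have "\<dots> = p^2 * ((1 - p) * c / p)" using q2 by simp
    also have "\<dots> = p * (1 - p) * c" using p by (simp add: power2_eq_square)
    finally have "p * (1 - p) * c = (p * q)^2" by simp
    then show ?thesis using p q0 by simp
  qed
  have qq: "(1 - p) * c = p * q * q" using q2 p by (simp add: field_simps power2_eq_square)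
  have "p / (1 + \<rho>) + (1 - p) * (1 - 1 / (1 + \<rho> * c)) = p * (c - q) / (c - 1) + (1 - p) * (1 - (c - q) / (q * (c - 1)))"
    unfolding e1 e2 by simp
  also have "\<dots> = 1 - (2 * (p * q) - 1) / (c - 1)"
  proof -
    have nz: "c - 1 \<noteq> 0" "q \<noteq> 0" using cg1 q0 by auto
    have "(1 - p) * (c - q) / q = p * q - (1 - p)"
    proof -
      have "(1 - p) * (c - q) = (1 - p) * c - (1 - p) * q" by (simp add: algebra_simps)
      also have "\<dots> = p * q * q - (1 - p) * q" using qq by simp
      finally show ?thesis using nz by (simp add: field_simps)
    qed
    moreover have "(1 - p) * ((c - q) / (q * (c - 1))) = ((1 - p) * (c - q) / q) / (c - 1)"
      using nz by (simp add: field_simps)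
    ultimately have Y: "(1 - p) * ((c - q) / (q * (c - 1))) = (p * q - (1 - p)) / (c - 1)" by simp
    have "p * (c - q) / (c - 1) + (1 - p) * (1 - (c - q) / (q * (c - 1)))
        = p * (c - q) / (c - 1) + (1 - p) - (1 - p) * ((c - q) / (q * (c - 1)))" by (simp add: algebra_simps)
    also have "\<dots> = p * (c - q) / (c - 1) + (1 - p) - (p * q - (1 - p)) / (c - 1)" using Y by simp
    also have "\<dots> = 1 - (2 * (p * q) - 1) / (c - 1)"
    proof -
      have "p * (c - q) / (c - 1) - (p * q - (1 - p)) / (c - 1) + (2 * (p * q) - 1) / (c - 1)
            = (p * (c - q) - (p * q - (1 - p)) + (2 * (p * q) - 1)) / (c - 1)"
        by (simp add: diff_divide_distrib add_divide_distrib)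
      also have "p * (c - q) - (p * q - (1 - p)) + (2 * (p * q) - 1) = p * (c - 1)" by (simp add: algebra_simps)
      also have "p * (c - 1) / (c - 1) = p" using nz by simp
      finally show ?thesis by linarith
    qed
    finally show ?thesis .
  qed
  also have "\<dots> = Bfun p c" unfolding Bfun_def pq using ck by simp
  finally show ?thesis using rpos by blast
qed


lemma gamma_facts:
  fixes \<pi> :: "theta \<Rightarrow> 's::finite \<Rightarrow> real"
  assumes hpos: "\<forall>th s. 0 < \<pi> th s" and hsum: "\<forall>th. (\<Sum>s\<in>UNIV. \<pi> th s) = 1" and hne: "\<pi> H \<noteq> \<pi> L"
  shows "0 < lunder \<pi>" "1 < gamma \<pi>"
    "\<exists>sh. \<pi> H sh / \<pi> L sh = lbar \<pi>" "\<exists>sl. \<pi> H sl / \<pi> L sl = lunder \<pi>"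
proof -
  have fin: "finite (range (\<lambda>s. \<pi> H s / \<pi> L s))" by simp
  have ne: "range (\<lambda>s. \<pi> H s / \<pi> L s) \<noteq> {}" by simp
  have "lbar \<pi> \<in> range (\<lambda>s. \<pi> H s / \<pi> L s)" unfolding lbar_def using fin ne by (rule Max_in)
  then show "\<exists>sh. \<pi> H sh / \<pi> L sh = lbar \<pi>" by auto
  have "lunder \<pi> \<in> range (\<lambda>s. \<pi> H s / \<pi> L s)" unfolding lunder_def using fin ne by (rule Min_in)
  then obtain sl where sl: "\<pi> H sl / \<pi> L sl = lunder \<pi>" by auto
  then show "\<exists>sl. \<pi> H sl / \<pi> L sl = lunder \<pi>" by auto
  show lu: "0 < lunder \<pi>" using sl[symmetric] hpos by simp
  have ex1: "\<exists>s. \<pi> L s < \<pi> H s"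
  proof (rule ccontr)
    assume "\<not> (\<exists>s. \<pi> L s < \<pi> H s)"
    then have le: "\<forall>s. \<pi> H s \<le> \<pi> L s" by (simp add: not_less)
    have "(\<Sum>s\<in>UNIV. \<pi> L s - \<pi> H s) = 0" using hsum by (simp add: sum_subtractf)
    then have "\<forall>s\<in>UNIV. \<pi> L s - \<pi> H s = 0" using sum_nonneg_eq_0_iff[of UNIV "\<lambda>s. \<pi> L s - \<pi> H s"] le by simp
    then have "\<pi> H = \<pi> L" by auto
    then show False using hne by simp
  qed
  have ex2: "\<exists>s. \<pi> H s < \<pi> L s"
  proof (rule ccontr)
    assume "\<not> (\<exists>s. \<pi> H s < \<pi> L s)"
    then have le: "\<forall>s. \<pi> L s \<le> \<pi> H s" by (simp add: not_less)
    have "(\<Sum>s\<in>UNIV. \<pi> H s - \<pi> L s) = 0" using hsum by (simp add: sum_subtractf)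
    then have "\<forall>s\<in>UNIV. \<pi> H s - \<pi> L s = 0" using sum_nonneg_eq_0_iff[of UNIV "\<lambda>s. \<pi> H s - \<pi> L s"] le by simp
    then have "\<pi> H = \<pi> L" by auto
    then show False using hne by simp
  qed
  obtain s1 where s1: "\<pi> L s1 < \<pi> H s1" using ex1 by blast
  obtain s2 where s2: "\<pi> H s2 < \<pi> L s2" using ex2 by blast
  have "1 < \<pi> H s1 / \<pi> L s1" using s1 hpos by simp
  also have "\<dots> \<le> lbar \<pi>" unfolding lbar_def using fin by (intro Max_ge) auto
  finally have lb: "1 < lbar \<pi>" .
  have "lunder \<pi> \<le> \<pi> H s2 / \<pi> L s2" unfolding lunder_def using fin by (intro Min_le) auto
  also have "\<dots> < 1" using s2 hpos by simp
  finally have "lunder \<pi> < 1" .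
  then show "1 < gamma \<pi>" unfolding gamma_def using lb lu by simp
qed

context proto begin
lemma lv_absorb: "absorbing f x \<Longrightarrow> lv \<sigma> u th x = u x"
proof -
  assume a: "absorbing f x"
  have "(\<lambda>n. endval m \<pi> f \<sigma> u th (Suc n) x) \<longlonglongrightarrow> u x" using a by simp
  then have "(\<lambda>n. endval m \<pi> f \<sigma> u th n x) \<longlonglongrightarrow> u x" by (rule LIMSEQ_imp_Suc)
  then show ?thesis unfolding lv_def by (rule limI)
qed
end

lemma UR_valuesI: "valid_protocol m f g a \<Longrightarrow> \<sigma> \<in> br m \<pi> p f g a \<Longrightarrow> UR m \<pi> p f g a \<sigma> \<in> UR_values m \<pi> p"
  unfolding UR_values_def by blast

lemma triv_elem:
  fixes \<pi> :: "theta \<Rightarrow> 's::finite \<Rightarrow> real" and p :: real and m :: nat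
  assumes hpos: "\<forall>th s. 0 < \<pi> th s" and hsum: "\<forall>th. (\<Sum>s\<in>UNIV. \<pi> th s) = 1" and m1: "1 \<le> m"
    and p: "0 < p" "p < 1"
  shows "max p (1 - p) \<in> UR_values m \<pi> p"
proof -
  define f0 :: "nat \<Rightarrow> 's \<Rightarrow> nat \<Rightarrow> real" where "f0 i s j = (if j = i then 1 else 0)" for i s j
  define g0 :: "nat \<Rightarrow> real" where "g0 i = ind (i = 1)" for i
  define b :: real where "b = (if 1/2 \<le> p then 1 else 0)"
  define a0 :: "nat \<Rightarrow> real" where "a0 i = b" for i
  define \<sigma>0 :: "nat \<Rightarrow> theta \<Rightarrow> real" where "\<sigma>0 i t = 0" for i t
  have vp: "valid_protocol m f0 g0 a0"
    unfolding valid_protocol_def f0_def g0_def a0_def b_def using m1 sum_ind[of "{1..m}" 1 "\<lambda>_. 1"]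
    by (auto simp: ind_def)
  interpret proto m \<pi> f0
    by unfold_locales (use hpos hsum in \<open>auto simp: f0_def\<close>)
  have abs: "absorbing f0 x" for x unfolding absorbing_def f0_def by simp
  have pay: "payoff_theta m \<pi> f0 g0 \<sigma> u th = u 1" for \<sigma> u th
  proof -
    have "payoff_theta m \<pi> f0 g0 \<sigma> u th = (\<Sum>x\<in>{1..m}. g0 x * u x)"
      unfolding payoff_lv using lv_absorb[OF abs] by simp
    also have "\<dots> = u 1" unfolding g0_def using m1 sum_ind[of "{1..m}" 1 u] by simp
    finally show ?thesis .
  qed
  have v0: "valid_strategy m \<sigma>0" unfolding valid_strategy_def \<sigma>0_def by simp
  have br: "\<sigma>0 \<in> br m \<pi> p f0 g0 a0" unfolding br_def US_def pay using v0 by simp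
  have "UR m \<pi> p f0 g0 a0 \<sigma>0 = max p (1 - p)" unfolding UR_def pay a0_def b_def by auto
  then show ?thesis using UR_valuesI[OF vp br] by simp
qed


lemma chain_elem:
  fixes \<pi> :: "theta \<Rightarrow> 's::finite \<Rightarrow> real" and p :: real and m :: nat
  assumes hpos: "\<forall>th s. 0 < \<pi> th s" and hsum: "\<forall>th. (\<Sum>s\<in>UNIV. \<pi> th s) = 1"
    and p: "0 < p" "p < 1" and gam1: "1 < gamma \<pi>" and lu: "0 < lunder \<pi>"
    and sh: "\<pi> H sh / \<pi> L sh = lbar \<pi>" and sl: "\<pi> H sl / \<pi> L sl = lunder \<pi>"
    and m3: "3 \<le> m" and ck: "kappa p < gamma \<pi> ^ (m - 2)" and d: "0 < \<delta>"
  shows "\<exists>y\<in>UR_values m \<pi> p. Bfun p (gamma \<pi> ^ (m - 2)) - \<delta> < y"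
proof -
  define c where "c = gamma \<pi> ^ (m - 2)"
  obtain \<rho> where r: "0 < \<rho>" and F: "p / (1 + \<rho>) + (1 - p) * (1 - 1 / (1 + \<rho> * c)) = Bfun p c"
    using rho_opt[OF p ck[folded c_def]] by blast
  have cpos: "0 < c" unfolding c_def using gam1 by simp
  define \<epsilon> where "\<epsilon> = min (1/2) (\<delta> / (2 * (p * \<rho> * m + 1)))"
  have nn: "0 \<le> p * \<rho> * m" using p r by simp
  then have den: "0 < p * \<rho> * m + 1" by linarith
  have e0: "0 < \<epsilon>" unfolding \<epsilon>_def using d den by simp
  have e1: "\<epsilon> \<le> 1" unfolding \<epsilon>_def by simp
  have e2: "\<epsilon> \<le> \<delta> / (2 * (p * \<rho> * m + 1))" unfolding \<epsilon>_def by simp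
  define Q where "Q j = (if j \<le> 1 then 1 else \<rho> * \<epsilon> ^ (m - 1 - j))" for j
  have Qpos: "0 < Q j" for j unfolding Q_def using r e0 by simp
  have lbar_eq: "lbar \<pi> = gamma \<pi> * lunder \<pi>" unfolding gamma_def using lu by simp
  have shsl: "sh \<noteq> sl"
  proof
    assume "sh = sl"
    then have "lbar \<pi> = lunder \<pi>" using sh sl by simp
    then show False using lbar_eq gam1 lu by simp
  qed
  have geq: "gamma \<pi> = (\<pi> H sh / \<pi> L sh) / (\<pi> H sl / \<pi> L sl)" unfolding gamma_def sh sl ..
  interpret chain \<pi> m sh sl Q
    by unfold_locales (use hpos hsum shsl m3 Qpos geq gam1 in auto)
  have yin: "UR m \<pi> p fc gc ac sc \<in> UR_values m \<pi> p"
    by (rule UR_valuesI[OF vp sc_br]) (use p in auto)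
  have yv: "UR m \<pi> p fc gc ac sc = p / ZZ H + (1 - p) * (1 - 1 / ZZ L)"
    unfolding UR_sc hh2 Q_def by simp
  have m1: "m = Suc (m - 1)" using m3 by simp
  have ZH: "ZZ H \<le> 1 + \<rho> + \<rho> * m * \<epsilon>"
  proof -
    have "ZZ H = (\<Sum>j\<in>{1..<m}. Q j)" unfolding ZZ_def QQ_def by simp
    also have "\<dots> = Q 1 + (\<Sum>j\<in>{Suc 1..<m}. Q j)" using m3 by (intro sum.atLeast_Suc_lessThan) simp
    also have "(\<Sum>j\<in>{Suc 1..<m}. Q j) = (\<Sum>j\<in>{2..<m - 1}. Q j) + Q (m - 1)"
    proof -
      have "(\<Sum>j\<in>{2..<Suc (m - 1)}. Q j) = (\<Sum>j\<in>{2..<m - 1}. Q j) + Q (m - 1)"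
        using m3 by (intro sum.atLeastLessThan_Suc) simp
      then show ?thesis using m1 by (simp add: numeral_2_eq_2)
    qed
    also have "Q (m - 1) = \<rho>"
    proof -
      have "\<not> m - 1 \<le> 1" using m3 by arith
      then show ?thesis unfolding Q_def by simp
    qed
    also have "(\<Sum>j\<in>{2..<m - 1}. Q j) \<le> (\<Sum>j\<in>{2..<m - 1}. \<rho> * \<epsilon>)"
    proof (intro sum_mono)
      fix j assume j: "j \<in> {2..<m - 1}"
      have "\<epsilon> ^ (m - 1 - j) \<le> \<epsilon> ^ 1" using j e0 e1 by (intro power_decreasing) auto
      then show "Q j \<le> \<rho> * \<epsilon>" unfolding Q_def using j r by (simp add: mult_left_mono)
    qed
    also have "(\<Sum>j\<in>{2..<m - 1}. \<rho> * \<epsilon>) \<le> \<rho> * m * \<epsilon>"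
    proof -
      have "(\<Sum>j\<in>{2..<m - 1}. \<rho> * \<epsilon>) = real (m - 1 - 2) * (\<rho> * \<epsilon>)" by simp
      also have "\<dots> \<le> real m * (\<rho> * \<epsilon>)" using r e0 by (intro mult_right_mono) auto
      finally show ?thesis by (simp add: mult_ac)
    qed
    finally show ?thesis unfolding Q_def by simp
  qed
  have ZL: "1 + \<rho> * c \<le> ZZ L"
  proof -
    have sub: "{1, m - 1} \<subseteq> {1..<m}" using m3 by auto
    have "(\<Sum>j\<in>{1, m - 1}. QQ L j) \<le> (\<Sum>j\<in>{1..<m}. QQ L j)"
      using QQ_pos by (intro sum_mono2[OF _ sub]) (auto intro: less_imp_le)
    moreover have "(\<Sum>j\<in>{1, m - 1}. QQ L j) = QQ L 1 + QQ L (m - 1)" using m3 by simp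
    moreover have "QQ L 1 = 1" unfolding QQ_def Q_def by simp
    moreover have "QQ L (m - 1) = \<rho> * c"
    proof -
      have "\<not> m - 1 \<le> 1" using m3 by arith
      moreover have "m - 1 - 1 = m - 2" by arith
      ultimately show ?thesis unfolding QQ_def Q_def c_def by (simp add: mult.commute)
    qed
    ultimately show ?thesis unfolding ZZ_def by simp
  qed
  define \<eta> where "\<eta> = \<rho> * m * \<epsilon>"
  have eta0: "0 \<le> \<eta>" unfolding \<eta>_def using r e0 by simp
  have ZHp: "0 < ZZ H" by (rule ZZ_pos)
  have t1: "p / (1 + \<rho> + \<eta>) \<le> p / ZZ H"
    using ZH ZHp p unfolding \<eta>_def by (intro divide_left_mono) auto
  have t2: "1 / ZZ L \<le> 1 / (1 + \<rho> * c)"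
  proof -
    have "0 < 1 + \<rho> * c" using r cpos by (simp add: add_pos_pos)
    then show ?thesis using ZL ZZ_pos[of L] by (intro divide_left_mono) auto
  qed
  have t3: "p / (1 + \<rho>) - p / (1 + \<rho> + \<eta>) \<le> p * \<eta>"
  proof -
    have "p / (1 + \<rho>) - p / (1 + \<rho> + \<eta>) = p * \<eta> / ((1 + \<rho>) * (1 + \<rho> + \<eta>))"
      using r eta0 by (simp add: field_simps)
    also have "\<dots> \<le> p * \<eta> / 1"
    proof (intro divide_left_mono)
      have "1 * 1 \<le> (1 + \<rho>) * (1 + \<rho> + \<eta>)" using r eta0 by (intro mult_mono) auto
      then show "1 \<le> (1 + \<rho>) * (1 + \<rho> + \<eta>)" by simp
    qed (use p eta0 r in auto)
    finally show ?thesis by simp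
  qed
  have t4: "p * \<eta> < \<delta>"
  proof -
    have "p * \<eta> = (p * \<rho> * m) * \<epsilon>" unfolding \<eta>_def by (simp add: mult_ac)
    also have "\<dots> \<le> (p * \<rho> * m) * (\<delta> / (2 * (p * \<rho> * m + 1)))"
      using e2 p r by (intro mult_left_mono) auto
    also have "\<dots> < \<delta>"
    proof -
      have "(p * \<rho> * m) * (\<delta> / (2 * (p * \<rho> * m + 1))) = \<delta> * ((p * \<rho> * m) / (2 * (p * \<rho> * m + 1)))"
        by (simp add: field_simps)
      also have "\<dots> < \<delta> * 1"
      proof (intro mult_strict_left_mono d)
        have pos2: "0 < 2 * (p * \<rho> * real m + 1)" by (rule mult_pos_pos) (use den in auto)
        have gen: "\<And>X::real. 0 \<le> X \<Longrightarrow> X < 1 * (2 * (X + 1))" by (simp add: algebra_simps)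
        have "p * \<rho> * real m < 1 * (2 * (p * \<rho> * real m + 1))" by (rule gen[OF nn])
        then show "p * \<rho> * real m / (2 * (p * \<rho> * real m + 1)) < 1" using pos_divide_less_eq[OF pos2] by simp
      qed
      finally show ?thesis by simp
    qed
    finally show ?thesis .
  qed
  have "Bfun p c - \<delta> < UR m \<pi> p fc gc ac sc"
  proof -
    have "(1 - p) * (1 - 1 / (1 + \<rho> * c)) \<le> (1 - p) * (1 - 1 / ZZ L)"
      using t2 p by (intro mult_left_mono) auto
    then show ?thesis unfolding yv using F t1 t3 t4 by linarith
  qed
  then show ?thesis using yin unfolding c_def by blast
qed


lemma kappa_ge1: "0 < p \<Longrightarrow> p < 1 \<Longrightarrow> 1 \<le> kappa p"
proof -
  assume p: "0 < p" "p < 1"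
  show ?thesis
  proof (cases "p \<le> 1/2")
    case True then have "1 \<le> (1 - p) / p" using p by (simp add: field_simps)
    then show ?thesis unfolding kappa_def by simp
  next
    case False then have "1 \<le> p / (1 - p)" using p by (simp add: field_simps)
    then show ?thesis unfolding kappa_def by simp
  qed
qed

theorem theorem2:
  fixes \<pi> :: "theta \<Rightarrow> 's::finite \<Rightarrow> real" and p :: real and m :: nat
  assumes hp: "0 < p" "p < 1"
    and hpos: "\<forall>th s. 0 < \<pi> th s"
    and hsum: "\<forall>th. (\<Sum>s\<in>UNIV. \<pi> th s) = 1"
    and hne: "\<pi> H \<noteq> \<pi> L"
    and hm: "2 \<le> m"
  shows "Sup (UR_values m \<pi> p) =
           (if gamma \<pi> ^ (m - 2) > kappa p
            then 1 - (2 * sqrt (p * (1 - p) * gamma \<pi> ^ (m - 2)) - 1) / (gamma \<pi> ^ (m - 2) - 1)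
            else max p (1 - p))
         \<and> (4 \<le> m \<and> gamma \<pi> ^ (m - 2) > kappa p \<longrightarrow>
             \<not> (\<exists>f g a \<sigma>. valid_protocol m f g a \<and> \<sigma> \<in> br m \<pi> p f g a \<and>
                   UR m \<pi> p f g a \<sigma> = Sup (UR_values m \<pi> p)))"
proof -
  note gf = gamma_facts[OF hpos hsum hne]
  have lu: "0 < lunder \<pi>" and gam1: "1 < gamma \<pi>" using gf by auto
  obtain sh where sh: "\<pi> H sh / \<pi> L sh = lbar \<pi>" using gf by blast
  obtain sl where sl: "\<pi> H sl / \<pi> L sl = lunder \<pi>" using gf by blast
  define c where "c = gamma \<pi> ^ (m - 2)"
  define B where "B = Bfun p c"
  have RHS: "(if gamma \<pi> ^ (m - 2) > kappa p
            then 1 - (2 * sqrt (p * (1 - p) * gamma \<pi> ^ (m - 2)) - 1) / (gamma \<pi> ^ (m - 2) - 1)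
            else max p (1 - p)) = B" unfolding B_def Bfun_def c_def ..
  define S where "S = UR_values m \<pi> p"
  have mem: "\<exists>f g a \<sigma>. y = UR m \<pi> p f g a \<sigma> \<and> valid_protocol m f g a \<and> \<sigma> \<in> br m \<pi> p f g a" if "y \<in> S" for y
    using that unfolding S_def UR_values_def by blast
  have upper: "y \<le> B" and strict: "4 \<le> m \<Longrightarrow> kappa p < c \<Longrightarrow> y < B" if y: "y \<in> S" for y
  proof -
    obtain f g a \<sigma> where e: "y = UR m \<pi> p f g a \<sigma>" and vp: "valid_protocol m f g a" and sb: "\<sigma> \<in> br m \<pi> p f g a"
      using mem[OF y] by blast
    interpret P: proto m \<pi> f
      by unfold_locales (use hpos hsum vp in \<open>auto simp: valid_protocol_def\<close>)
    show "y \<le> B" unfolding e B_def c_def by (rule P.upper(1)[OF hp gam1 lu hm vp sb])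
    show "4 \<le> m \<Longrightarrow> kappa p < c \<Longrightarrow> y < B" unfolding e B_def c_def
      by (rule P.upper(2)[OF hp gam1 lu hm vp sb])
  qed
  have triv: "max p (1 - p) \<in> S" unfolding S_def using triv_elem[OF hpos hsum _ hp] hm by simp
  have supB: "Sup S = B"
  proof (cases "kappa p < c")
    case True
    have m3: "3 \<le> m"
    proof (rule ccontr)
      assume "\<not> 3 \<le> m"
      then have "m = 2" using hm by simp
      then have "c = 1" unfolding c_def by simp
      then show False using True kappa_ge1[OF hp] by simp
    qed
    show ?thesis
    proof (rule cSup_eq_non_empty)
      show "S \<noteq> {}" using triv by blast
      show "\<And>x. x \<in> S \<Longrightarrow> x \<le> B" using upper by blast
      fix y assume ub: "\<And>x. x \<in> S \<Longrightarrow> x \<le> y"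
      show "B \<le> y"
      proof (rule ccontr)
        assume "\<not> B \<le> y"
        then have d: "0 < B - y" by simp
        obtain z where z: "z \<in> S" "B - (B - y) < z"
          using chain_elem[OF hpos hsum hp gam1 lu sh sl m3 True[unfolded c_def] d] unfolding S_def B_def c_def by blast
        then show False using ub[OF z(1)] by simp
      qed
    qed
  next
    case False
    then have "B = max p (1 - p)" unfolding B_def Bfun_def by simp
    then show ?thesis using triv upper by (intro cSup_eq_maximum) auto
  qed
  show ?thesis
  proof
    show "Sup (UR_values m \<pi> p) =
           (if gamma \<pi> ^ (m - 2) > kappa p
            then 1 - (2 * sqrt (p * (1 - p) * gamma \<pi> ^ (m - 2)) - 1) / (gamma \<pi> ^ (m - 2) - 1)
            else max p (1 - p))" unfolding RHS using supB unfolding S_def .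
    show "4 \<le> m \<and> gamma \<pi> ^ (m - 2) > kappa p \<longrightarrow>
             \<not> (\<exists>f g a \<sigma>. valid_protocol m f g a \<and> \<sigma> \<in> br m \<pi> p f g a \<and>
                   UR m \<pi> p f g a \<sigma> = Sup (UR_values m \<pi> p))"
    proof (intro impI notI)
      assume h: "4 \<le> m \<and> gamma \<pi> ^ (m - 2) > kappa p"
      assume "\<exists>f g a \<sigma>. valid_protocol m f g a \<and> \<sigma> \<in> br m \<pi> p f g a \<and>
                   UR m \<pi> p f g a \<sigma> = Sup (UR_values m \<pi> p)"
      then obtain f g a \<sigma> where vp: "valid_protocol m f g a" and sb: "\<sigma> \<in> br m \<pi> p f g a"
        and eq: "UR m \<pi> p f g a \<sigma> = Sup (UR_values m \<pi> p)" by blast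
      have yS: "UR m \<pi> p f g a \<sigma> \<in> S" unfolding S_def by (rule UR_valuesI[OF vp sb])
      have "UR m \<pi> p f g a \<sigma> < B" using strict[OF yS] h unfolding c_def by blast
      then show False using eq supB unfolding S_def by simp
    qed
  qed
qed


end
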